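(* Let $(P_X,P_{Y|X})$ be an input/channel pair and $\Theta_0\sim\mathcal U$. Consider the transmission scheme $X_{n+1}=g_{n+1}(\Theta_0,Y^n)$ with $g_{n+1}(\theta,y^n)=F_X^{-1}\big(F_{\Theta_0|Y^n}(\theta\,|\,y^n)\big)$ for $n\ge0$ (so $X_1=F_X^{-1}(\Theta_0)$), used over the memoryless channel $P_{Y|X}$. Then for every $n\ge 0$: the random variable $U_n\triangleq F_{\Theta_0|Y^n}(\Theta_0|Y^n)$ is uniform on $(0,1)$ and statistically independent of $Y^n$; $\Theta_0$ can be a.s. uniquely recovered from $(U_n,Y^n)$; and consequently $X_{n+1}\sim P_X$ and $X_{n+1}$ is independent of $Y^n$.
   Context: All real r.v.'s are mixtures of absolutely continuous and discrete parts. $F_X$ is the c.d.f. of $X$, $F_X^{-1}(t)=\inf\{x:F_X(x)>t\}$; $\mathcal U$ is the uniform distribution on $(0,1)$. A memoryless channel is a conditional distribution $P_{Y|X}$ on $\mathbb R$; its input alphabet is the set of $x$ for which $P_{Y|X}(\cdot|x)$ is defined. An input/channel pair $(P_X,P_{Y|X})$ is one with $\mathrm{supp}(X)$ contained in the input alphabet and $I(X;Y)<\infty$. Transmission over the channel means $P_{Y_n|X^nY^{n-1}}(\cdot|x^n,y^{n-1})=P_{Y|X}(\cdot|x_n)$. $F_{\Theta_0|Y^n}(\cdot|y^n)$ is the posterior c.d.f. of the message point $\Theta_0$ given the outputs $Y^n=y^n$. *)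

theory Defs
  imports "HOL-Probability.Probability"
begin

definition quantile_fn :: "(real \<Rightarrow> real) \<Rightarrow> real \<Rightarrow> real" where
  "quantile_fn F t = Inf {x. F x > t}"

definition measure_support :: "real measure \<Rightarrow> real set" where
  "measure_support \<mu> = {x. \<forall>e>0. emeasure \<mu> (ball x e) > 0}"

text \<open>Standing assumption: a mixture of an absolutely continuous and a discrete part,
  i.e. off some countable set the measure is absolutely continuous w.r.t. Lebesgue.\<close>
definition ac_plus_discrete :: "real measure \<Rightarrow> bool" where
  "ac_plus_discrete \<mu> \<longleftrightarrow> (\<exists>D. countable D \<and>
     (\<forall>S\<in>sets borel. S \<inter> D = {} \<and> emeasure lborel S = 0 \<longrightarrow> emeasure \<mu> S = 0))"

definition joint_law :: "real measure \<Rightarrow> (real \<Rightarrow> real measure) \<Rightarrow> (real \<times> real) measure" where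
  "joint_law PX K = PX \<bind> (\<lambda>x. distr (K x) (borel \<Otimes>\<^sub>M borel) (\<lambda>y. (x, y)))"

text \<open>I(X;Y) < \<infinity>: the joint law is absolutely continuous w.r.t. the product of the marginals
  and the information density ln(dP_XY / d(P_X x P_Y)) is integrable under P_XY
  (equivalently, the mutual information = KL divergence is finite).\<close>
definition finite_mutual_info :: "real measure \<Rightarrow> (real \<Rightarrow> real measure) \<Rightarrow> bool" where
  "finite_mutual_info PX K \<longleftrightarrow>
     (let J = joint_law PX K; Q = PX \<Otimes>\<^sub>M (PX \<bind> K) in
      absolutely_continuous Q J \<and> integrable J (\<lambda>z. ln (enn2real (RN_deriv Q J z))))"

definition Yspace :: "nat \<Rightarrow> (nat \<Rightarrow> real) measure" where
  "Yspace n = PiM {..<n} (\<lambda>_. borel)"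

definition Yvec :: "(nat \<Rightarrow> 'a \<Rightarrow> real) \<Rightarrow> nat \<Rightarrow> 'a \<Rightarrow> (nat \<Rightarrow> real)" where
  "Yvec Y n \<omega> = restrict (\<lambda>i. Y i \<omega>) {..<n}"

end

theory Submission
  imports Defs
begin


lemma cara_meas:
  fixes G :: "'b \<Rightarrow> real \<Rightarrow> real"
  assumes gm: "\<And>\<theta>. (\<lambda>y. G y \<theta>) \<in> borel_measurable N"
    and rc: "\<And>y \<theta>. continuous (at_right \<theta>) (G y)"
  shows "(\<lambda>p. G (snd p) (fst p)) \<in> borel_measurable (borel \<Otimes>\<^sub>M N)"
proof (rule borel_measurable_LIMSEQ_real)
  define c where "c m t = (real_of_int \<lceil>t * real (Suc m)\<rceil> + 1) / real (Suc m)" for m :: nat and t :: real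
  show "(\<lambda>p. G (snd p) (c m (fst p))) \<in> borel_measurable (borel \<Otimes>\<^sub>M N)" for m
  proof -
    have "(\<lambda>p. (\<lambda>i::int. \<lambda>p. G (snd p) ((real_of_int i + 1) / real (Suc m))) (\<lceil>fst p * real (Suc m)\<rceil>) p)
        \<in> borel_measurable (borel \<Otimes>\<^sub>M N)"
    proof (rule measurable_compose_countable[where f="\<lambda>i p. G (snd p) ((real_of_int i + 1) / real (Suc m))" and g="\<lambda>p. \<lceil>fst p * real (Suc m)\<rceil>"])
      show "(\<lambda>p. G (snd p) ((real_of_int i + 1) / real (Suc m))) \<in> borel_measurable (borel \<Otimes>\<^sub>M N)" for i
        by (rule measurable_compose[OF measurable_snd gm])
      show "(\<lambda>p. \<lceil>fst p * real (Suc m)\<rceil>) \<in> measurable (borel \<Otimes>\<^sub>M N) (count_space UNIV)"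
        by measurable
    qed
    then show ?thesis by (simp add: c_def)
  qed
  fix p :: "real \<times> 'b" assume "p \<in> space (borel \<Otimes>\<^sub>M N)"
  obtain t y where p: "p = (t, y)" by (cases p)
  have lo: "t < c m t" for m
  proof -
    have "t * real (Suc m) \<le> real_of_int \<lceil>t * real (Suc m)\<rceil>" by linarith
    then have "t * real (Suc m) < real_of_int \<lceil>t * real (Suc m)\<rceil> + 1" by linarith
    then show ?thesis unfolding c_def by (simp add: field_simps)
  qed
  have hi: "c m t \<le> t + 2 / real (Suc m)" for m
  proof -
    have h: "real_of_int \<lceil>t * real (Suc m)\<rceil> \<le> t * real (Suc m) + 1" by linarith
    have "(real_of_int \<lceil>t * real (Suc m)\<rceil> + 1) / real (Suc m) \<le> (t * real (Suc m) + 2) / real (Suc m)"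
      by (rule divide_right_mono) (use h in linarith, simp)
    also have "\<dots> = t + 2 / real (Suc m)" by (simp add: field_simps)
    finally show ?thesis unfolding c_def .
  qed
  have "(\<lambda>m. t + 2 * inverse (real (Suc m))) \<longlonglongrightarrow> t + 2 * 0"
    by (intro tendsto_intros LIMSEQ_inverse_real_of_nat)
  then have hi': "(\<lambda>m. t + 2 / real (Suc m)) \<longlonglongrightarrow> t" by (simp add: divide_inverse)
  have "(\<lambda>m. c m t) \<longlonglongrightarrow> t"
    by (rule tendsto_sandwich[OF _ _ tendsto_const hi']) (auto intro!: always_eventually less_imp_le[OF lo] hi[unfolded of_nat_Suc])
  then have "filterlim (\<lambda>m. c m t) (at_right t) sequentially"
    using lo by (auto simp: filterlim_at intro!: always_eventually less_imp_neq[symmetric])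
  then have "(\<lambda>m. G y (c m t)) \<longlonglongrightarrow> G y t"
    using rc[where y=y] by (simp add: continuous_within) (metis filterlim_compose)
  then show "(\<lambda>m. G (snd p) (c m (fst p))) \<longlonglongrightarrow> G (snd p) (fst p)" by (simp add: p)
qed



abbreviation UNI :: "real measure" where "UNI \<equiv> uniform_measure lborel {0<..<1::real}"

lemma UNI_emeasure: "B \<in> sets borel \<Longrightarrow> emeasure UNI B = emeasure lborel ({0<..<1} \<inter> B)"
  by (subst emeasure_uniform_measure) (auto simp: divide_ennreal_def)

lemma UNI_prob: "prob_space UNI"
  by (rule prob_space_uniform_measure) auto

lemma UNI_rd: "real_distribution UNI"
  unfolding real_distribution_def real_distribution_axioms_def using UNI_prob by simp

lemma sets_UNI[simp, measurable_cong]: "sets UNI = sets borel" by simp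

lemma UNI_measure: "B \<in> sets borel \<Longrightarrow> measure UNI B = measure lborel ({0<..<1} \<inter> B)"
  by (simp add: measure_def divide_ennreal_def)

lemma UNI_cdf: "cdf UNI u = max 0 (min 1 u)"
proof -
  have "cdf UNI u = measure lborel ({0<..<1} \<inter> {..u})" by (simp add: cdf_def UNI_measure)
  also have "\<dots> = max 0 (min 1 u)"
  proof (cases "u \<le> 0")
    case True then have "{0<..<1} \<inter> {..u} = {}" by auto
    then show ?thesis using True by simp
  next
    case False
    show ?thesis
    proof (cases "u < 1")
      case True then have "{0<..<1} \<inter> {..u} = {0<..u}" by auto
      then show ?thesis using True False by simp
    next
      case F2: False then have "{0<..<1} \<inter> {..u} = {0<..<1::real}" by auto
      then show ?thesis using F2 by simp
    qed
  qed
  finally show ?thesis .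
qed

lemma UNI_Ioo_full: "emeasure UNI {0<..<1} = 1"
  by (simp add: UNI_emeasure)

lemma AE_UNI_Ioo: "AE u in UNI. 0 < u \<and> u < 1"
proof -
  have "emeasure UNI (- {0<..<1}) = 0" by (simp add: UNI_emeasure)
  then show ?thesis
    by (intro AE_I[of _ _ "- {0<..<1}"]) auto
qed




lemma quantile_le_iff:
  fixes F :: "real \<Rightarrow> real"
  assumes mono: "mono F" and rc: "\<And>x. continuous (at_right x) F"
    and bot: "(F \<longlongrightarrow> 0) at_bot" and top: "(F \<longlongrightarrow> 1) at_top"
    and t: "0 < t" "t < 1"
  shows "t < F x \<Longrightarrow> quantile_fn F t \<le> x"
    and "quantile_fn F t \<le> x \<Longrightarrow> t \<le> F x"
proof -
  let ?S = "{z. F z > t}"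
  have "eventually (\<lambda>z. F z < t) at_bot"
    using order_tendstoD(2)[OF bot t(1)] .
  then obtain b where b: "\<And>z. z \<le> b \<Longrightarrow> F z < t" by (auto simp: eventually_at_bot_linorder)
  have bdd: "bdd_below ?S"
    by (rule bdd_belowI[of _ b]) (metis b linorder_not_less mem_Collect_eq order_less_asym)
  show "t < F x \<Longrightarrow> quantile_fn F t \<le> x"
    unfolding quantile_fn_def by (rule cInf_lower) (use bdd in auto)
  assume le: "quantile_fn F t \<le> x"
  show "t \<le> F x"
  proof (rule ccontr)
    assume "\<not> t \<le> F x"
    then have "F x < t" by simp
    have "eventually (\<lambda>z. F z < t) (at_right x)"
      using rc[of x] \<open>F x < t\<close> by (simp add: continuous_within order_tendstoD(2))
    then obtain c where c: "c > x" "\<And>z. z > x \<Longrightarrow> z < c \<Longrightarrow> F z < t"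
      by (auto simp: eventually_at_right_field)
    define d where "d = (x + c) / 2"
    have d: "x < d" "F d < t" using c by (auto simp: d_def)
    have "\<forall>z\<in>?S. d \<le> z"
    proof
      fix z assume "z \<in> ?S"
      then have "F z > t" by simp
      show "d \<le> z"
      proof (rule ccontr)
        assume "\<not> d \<le> z" then have "z \<le> d" by simp
        then have "F z \<le> F d" using mono by (auto simp: mono_def)
        with d \<open>F z > t\<close> show False by simp
      qed
    qed
    moreover have "?S \<noteq> {}"
    proof -
      have "eventually (\<lambda>z. F z > t) at_top" using order_tendstoD(1)[OF top t(2)] .
      then obtain z where "F z > t" by (auto simp: eventually_at_top_linorder)
      then show ?thesis by auto
    qed
    ultimately have "d \<le> quantile_fn F t" unfolding quantile_fn_def by (intro cInf_greatest) auto
    with le d show False by simp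
  qed
qed

lemma cdf_like_bounds:
  fixes F :: "real \<Rightarrow> real"
  assumes mono: "mono F" and bot: "(F \<longlongrightarrow> 0) at_bot" and top: "(F \<longlongrightarrow> 1) at_top"
  shows "0 \<le> F x" "F x \<le> 1"
proof -
  show "0 \<le> F x"
    by (rule tendsto_upperbound[OF bot]) (auto simp: eventually_at_bot_linorder intro!: exI[of _ x] monoD[OF mono])
  show "F x \<le> 1"
    by (rule tendsto_lowerbound[OF top]) (auto simp: eventually_at_top_linorder intro!: exI[of _ x] monoD[OF mono])
qed

lemma quantile_meas:
  fixes F :: "real \<Rightarrow> real"
  assumes mono: "mono F" and bot: "(F \<longlongrightarrow> 0) at_bot" and top: "(F \<longlongrightarrow> 1) at_top"
  shows "quantile_fn F \<in> borel_measurable borel"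
proof -
  have b: "0 \<le> F x" "F x \<le> 1" for x using cdf_like_bounds[OF assms] by auto
  let ?g = "\<lambda>t::real. if t < 0 then Inf (UNIV::real set) else if t = 0 then quantile_fn F 0 else Inf ({}::real set)"
  have eq: "quantile_fn F = (\<lambda>t. if t \<in> {0<..<1} then quantile_fn F t else ?g t)"
  proof
    fix t :: real
    show "quantile_fn F t = (if t \<in> {0<..<1} then quantile_fn F t else ?g t)"
    proof (cases "t \<in> {0<..<1}")
      case False
      show ?thesis
      proof (cases "t < 0")
        case True
        then have "{z. F z > t} = UNIV" by (force intro: less_le_trans[OF True b(1)])
        then show ?thesis using True by (simp add: quantile_fn_def)
      next
        case F1: False
        show ?thesis
        proof (cases "t = 0")
          case False
          with F1 \<open>t \<notin> _\<close> have "t \<ge> 1" by auto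
          then have "{z. F z > t} = {}" using b by (auto simp: not_less intro: order_trans)
          then show ?thesis using F1 False by (simp add: quantile_fn_def)
        qed simp
      qed
    qed simp
  qed
  have mq: "mono_on {0<..<1} (quantile_fn F)"
  proof (rule mono_onI)
    fix s t :: real assume st: "s \<in> {0<..<1}" "t \<in> {0<..<1}" "s \<le> t"
    have ne: "{z. F z > t} \<noteq> {}"
    proof -
      have "eventually (\<lambda>z. F z > t) at_top" using order_tendstoD(1)[OF top] st by auto
      then obtain z where "F z > t" by (auto simp: eventually_at_top_linorder)
      then show ?thesis by auto
    qed
    have "eventually (\<lambda>z. F z < s) at_bot" using order_tendstoD(2)[OF bot] st by auto
    then obtain c where c: "\<And>z. z \<le> c \<Longrightarrow> F z < s" by (auto simp: eventually_at_bot_linorder)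
    have bdd: "bdd_below {z. F z > s}"
      by (rule bdd_belowI[of _ c]) (metis c linorder_not_less mem_Collect_eq order_less_asym)
    show "quantile_fn F s \<le> quantile_fn F t"
      unfolding quantile_fn_def
      by (rule cInf_superset_mono[OF ne bdd]) (use st in auto)
  qed
  have m1: "quantile_fn F \<in> borel_measurable (restrict_space borel {x. x \<in> {0<..<1}})"
    using borel_measurable_mono_on_fnc[OF mq] by (simp only: Collect_mem_eq)
  have m2: "?g \<in> borel_measurable (restrict_space borel {x. x \<notin> {0<..<1}})"
    by (rule measurable_restrict_space1) measurable
  show ?thesis
    by (subst eq, subst measurable_If_restrict_space_iff) (use m1 m2 in auto)
qed

lemma quantile_distr:
  assumes P: "real_distribution P"
  shows "distr UNI borel (quantile_fn (cdf P)) = P"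
proof -
  interpret P: real_distribution P by fact
  let ?F = "cdf P" and ?q = "quantile_fn (cdf P)"
  have mono: "mono ?F" by (auto simp: mono_def P.cdf_nondecreasing)
  have rc: "\<And>x. continuous (at_right x) ?F" by (rule P.cdf_is_right_cont)
  have bot: "(?F \<longlongrightarrow> 0) at_bot" by (rule P.cdf_lim_at_bot)
  have top: "(?F \<longlongrightarrow> 1) at_top" by (rule P.cdf_lim_at_top_prob)
  have qm: "?q \<in> borel_measurable borel" by (rule quantile_meas[OF mono bot top])
  interpret U: prob_space UNI by (rule UNI_prob)
  have qm': "?q \<in> measurable UNI borel" using qm by (simp cong: measurable_cong_sets)
  have "real_distribution (distr UNI borel ?q)"
    by (rule U.real_distribution_distr[OF qm'])
  moreover have "cdf (distr UNI borel ?q) = ?F"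
  proof
    fix x
    let ?B = "?q -` {..x}"
    have Bm: "?B \<in> sets borel" using measurable_sets[OF qm, of "{..x}"] by simp
    have "cdf (distr UNI borel ?q) x = measure UNI ?B"
      unfolding cdf_def[of "distr UNI borel ?q"] by (subst measure_distr[OF qm']) auto
    moreover have "measure UNI ({..<?F x}) \<le> measure UNI ?B"
    proof -
      have "measure UNI ({..<?F x}) = measure UNI ({0<..<1} \<inter> {..<?F x})"
        by (simp add: UNI_measure Int_assoc[symmetric] Int_absorb)
      also have "\<dots> \<le> measure UNI ?B"
        by (rule U.finite_measure_mono) (use quantile_le_iff(1)[OF mono rc bot top] Bm in auto)
      finally show ?thesis .
    qed
    moreover have "measure UNI ?B \<le> measure UNI ({..?F x})"
    proof -
      have "measure UNI ?B = measure UNI ({0<..<1} \<inter> ?B)"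
        using Bm by (simp add: UNI_measure Int_assoc[symmetric] Int_absorb)
      also have "\<dots> \<le> measure UNI {..?F x}"
        by (rule U.finite_measure_mono) (use quantile_le_iff(2)[OF mono rc bot top] in auto)
      finally show ?thesis .
    qed
    moreover have "measure UNI ({..<?F x}) = ?F x" "measure UNI ({..?F x}) = ?F x"
    proof -
      have a: "0 \<le> ?F x" "?F x \<le> 1" using cdf_like_bounds[OF mono bot top, of x] by auto
      have "{0<..<1} \<inter> {..<?F x} = {0<..<?F x}" using a by auto
      then show "measure UNI ({..<?F x}) = ?F x" using a by (simp add: UNI_measure)
      show "measure UNI ({..?F x}) = ?F x"
      proof (cases "?F x = 1")
        case True
        then have "{0<..<1} \<inter> {..?F x} = {0<..<1}" by auto
        then show ?thesis using True by (simp add: UNI_measure)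
      next
        case False
        then have "{0<..<1} \<inter> {..?F x} = {0<..?F x}" using a by auto
        then show ?thesis using a by (simp add: UNI_measure)
      qed
    qed
    ultimately show "cdf (distr UNI borel ?q) x = ?F x" by linarith
  qed
  ultimately show ?thesis
    using cdf_unique[OF _ P] by blast
qed




lemma pit:
  assumes L: "real_distribution L" and na: "\<And>x. measure L {x} = 0"
  shows "distr L borel (cdf L) = UNI"
proof -
  interpret L: real_distribution L by fact
  let ?F = "cdf L"
  have mono: "mono ?F" by (auto simp: mono_def L.cdf_nondecreasing)
  have bot: "(?F \<longlongrightarrow> 0) at_bot" by (rule L.cdf_lim_at_bot)
  have top: "(?F \<longlongrightarrow> 1) at_top" by (rule L.cdf_lim_at_top_prob)
  have cont: "isCont ?F x" for x using L.isCont_cdf na by simp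
  have Fm: "?F \<in> borel_measurable borel" by (rule borel_measurable_mono[OF mono])
  have Fm': "?F \<in> borel_measurable L" using Fm by (simp cong: measurable_cong_sets)
  have b: "0 \<le> ?F x" "?F x \<le> 1" for x using cdf_like_bounds[OF mono bot top] by auto
  have key: "measure L {t. ?F t \<le> u} = max 0 (min 1 u)" for u
  proof (cases "u < 0")
    case True
    then have "{t. ?F t \<le> u} = {}" using b by (auto simp: not_le intro: less_le_trans)
    then show ?thesis using True by simp
  next
    case F1: False
    show ?thesis
    proof (cases "u \<ge> 1")
      case True
      then have "{t. ?F t \<le> u} = UNIV" using b by (auto intro: order_trans)
      then show ?thesis using True L.prob_space by simp
    next
      case False
      then have u: "0 \<le> u" "u < 1" using F1 by auto
      let ?S = "{t. ?F t \<le> u}"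
      have "eventually (\<lambda>t. ?F t > u) at_top" using order_tendstoD(1)[OF top u(2)] .
      then obtain c where c: "\<And>t. t \<ge> c \<Longrightarrow> ?F t > u" by (auto simp: eventually_at_top_linorder)
      have bdd: "bdd_above ?S"
        by (rule bdd_aboveI[of _ c]) (metis c linorder_not_le mem_Collect_eq less_imp_le)
      show ?thesis
      proof (cases "?S = {}")
        case True
        have "u = 0"
        proof (rule ccontr)
          assume "u \<noteq> 0" then have "u > 0" using u by simp
          have "eventually (\<lambda>t. ?F t < u) at_bot" using order_tendstoD(2)[OF bot \<open>u > 0\<close>] .
          then obtain d where "\<And>t. t \<le> d \<Longrightarrow> ?F t < u" by (auto simp: eventually_at_bot_linorder)
          then have "d \<in> ?S" by (simp add: less_imp_le)
          with True show False by simp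
        qed
        then show ?thesis using True by simp
      next
        case False
        have cl: "closed ?S"
          by (rule closed_Collect_le) (auto intro: continuous_at_imp_continuous_on cont)
        define s where "s = Sup ?S"
        have sS: "s \<in> ?S" unfolding s_def by (rule closed_contains_Sup[OF False bdd cl])
        have Seq: "?S = {..s}"
        proof
          show "?S \<subseteq> {..s}" unfolding s_def using bdd by (auto intro: cSup_upper)
          show "{..s} \<subseteq> ?S" using sS monoD[OF mono] by (auto intro: order_trans)
        qed
        have "?F s = u"
        proof (rule ccontr)
          assume "?F s \<noteq> u" then have "?F s < u" using sS by simp
          then have "eventually (\<lambda>t. ?F t < u) (at s)"
            using cont[of s] by (simp add: isCont_def order_tendstoD(2))
          then have "eventually (\<lambda>t. ?F t < u) (at_right s)"
            by (rule eventually_at_split[THEN iffD1, THEN conjunct2])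
          then obtain e where e: "e > s" "\<And>t. t > s \<Longrightarrow> t < e \<Longrightarrow> ?F t < u"
            by (auto simp: eventually_at_right_field)
          have "(s + e) / 2 \<in> ?S" using e by (auto intro!: less_imp_le)
          then have "(s + e) / 2 \<le> s" using Seq by auto
          with e show False by simp
        qed
        then have "measure L ?S = u" using Seq by (simp add: cdf_def)
        then show ?thesis using u by simp
      qed
    qed
  qed
  have "real_distribution (distr L borel ?F)" by (rule L.real_distribution_distr[OF Fm'])
  moreover have "cdf (distr L borel ?F) = cdf UNI"
  proof
    fix u
    have "cdf (distr L borel ?F) u = measure L (?F -` {..u})"
      unfolding cdf_def[of "distr L borel ?F"] by (subst measure_distr[OF Fm']) auto
    also have "?F -` {..u} = {t. ?F t \<le> u}" by auto
    finally show "cdf (distr L borel ?F) u = cdf UNI u" using key UNI_cdf by simp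
  qed
  ultimately show ?thesis using cdf_unique[OF _ UNI_rd] by blast
qed




locale th6 = prob_space M for M :: "'a measure" +
  fixes PX :: "real measure" and K :: "real \<Rightarrow> real measure"
    and \<Theta>0 :: "'a \<Rightarrow> real" and Y :: "nat \<Rightarrow> 'a \<Rightarrow> real"
    and X :: "nat \<Rightarrow> 'a \<Rightarrow> real" and Fpost :: "nat \<Rightarrow> (nat \<Rightarrow> real) \<Rightarrow> real \<Rightarrow> real"
  assumes PX: "prob_space PX" "sets PX = sets borel"
    and Kmeas: "K \<in> borel \<rightarrow>\<^sub>M subprob_algebra borel"
    and info: "finite_mutual_info PX K"
    and theta: "\<Theta>0 \<in> borel_measurable M"
      "distr M borel \<Theta>0 = uniform_measure lborel {0<..<1}"
    and Ymeas: "\<forall>i. Y i \<in> borel_measurable M"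
    and post_cdf: "\<forall>n y. mono (Fpost n y) \<and> (\<forall>\<theta>. continuous (at_right \<theta>) (Fpost n y))
        \<and> (Fpost n y \<longlongrightarrow> 0) at_bot \<and> (Fpost n y \<longlongrightarrow> 1) at_top"
    and post_meas: "\<forall>n \<theta>. (\<lambda>y. Fpost n y \<theta>) \<in> borel_measurable (Yspace n)"
    and posterior: "\<forall>n \<theta> B. B \<in> sets (Yspace n) \<longrightarrow>
        measure M {\<omega>\<in>space M. \<Theta>0 \<omega> \<le> \<theta> \<and> Yvec Y n \<omega> \<in> B}
        = (\<integral>\<omega>. indicator B (Yvec Y n \<omega>) * Fpost n (Yvec Y n \<omega>) \<theta> \<partial>M)"
    and encoder: "\<forall>n \<omega>. X n \<omega> = quantile_fn (cdf PX) (Fpost n (Yvec Y n \<omega>) (\<Theta>0 \<omega>))"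
    and channel: "\<forall>n B C. B \<in> sets (borel \<Otimes>\<^sub>M Yspace n) \<longrightarrow> C \<in> sets borel \<longrightarrow>
        emeasure M {\<omega>\<in>space M. (\<Theta>0 \<omega>, Yvec Y n \<omega>) \<in> B \<and> Y n \<omega> \<in> C}
        = (\<integral>\<^sup>+\<omega>. indicator B (\<Theta>0 \<omega>, Yvec Y n \<omega>) * emeasure (K (X n \<omega>)) C \<partial>M)"
begin

definition "nu n = distr M (Yspace n) (Yvec Y n)"
definition "mu n = distr M (borel \<Otimes>\<^sub>M Yspace n) (\<lambda>\<omega>. (\<Theta>0 \<omega>, Yvec Y n \<omega>))"
definition "U n \<omega> = Fpost n (Yvec Y n \<omega>) (\<Theta>0 \<omega>)"
abbreviation "q \<equiv> quantile_fn (cdf PX)"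

lemma Fmono: "mono (Fpost n y)" and Frc: "continuous (at_right \<theta>) (Fpost n y)"
  and Fbot: "(Fpost n y \<longlongrightarrow> 0) at_bot" and Ftop: "(Fpost n y \<longlongrightarrow> 1) at_top"
  using post_cdf by auto

lemma Fbounds: "0 \<le> Fpost n y t" "Fpost n y t \<le> 1"
  using cdf_like_bounds[OF Fmono Fbot Ftop] by auto

lemma Fmeas[measurable]: "(\<lambda>y. Fpost n y \<theta>) \<in> borel_measurable (Yspace n)"
  using post_meas by auto

lemma Yvec_meas[measurable]: "Yvec Y n \<in> measurable M (Yspace n)"
proof -
  have "(\<lambda>\<omega>. \<lambda>i\<in>{..<n}. Y i \<omega>) \<in> measurable M (Pi\<^sub>M {..<n} (\<lambda>_. borel))"
    using Ymeas by (intro measurable_restrict) auto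
  then show ?thesis by (simp add: Yvec_def[abs_def] Yspace_def)
qed

lemma Ymeas'[measurable]: "Y i \<in> borel_measurable M" using Ymeas by auto
lemma theta_meas[measurable]: "\<Theta>0 \<in> borel_measurable M" using theta by auto

lemma Fjoint[measurable]: "(\<lambda>p. Fpost n (snd p) (fst p)) \<in> borel_measurable (borel \<Otimes>\<^sub>M Yspace n)"
  by (rule cara_meas[OF Fmeas Frc])

lemma Z_meas[measurable]: "(\<lambda>\<omega>. (\<Theta>0 \<omega>, Yvec Y n \<omega>)) \<in> measurable M (borel \<Otimes>\<^sub>M Yspace n)"
  by measurable

lemma U_meas[measurable]: "U n \<in> borel_measurable M"
proof -
  have "(\<lambda>\<omega>. (\<lambda>p. Fpost n (snd p) (fst p)) (\<Theta>0 \<omega>, Yvec Y n \<omega>)) \<in> borel_measurable M"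
    by (rule measurable_compose[OF Z_meas Fjoint])
  then show ?thesis by (simp add: U_def[abs_def])
qed

lemma PX_rd: "real_distribution PX"
  using PX by (auto simp: real_distribution_def real_distribution_axioms_def)

lemma q_meas[measurable]: "q \<in> borel_measurable borel"
proof -
  interpret P: real_distribution PX by (rule PX_rd)
  show ?thesis
    by (rule quantile_meas) (auto simp: mono_def P.cdf_nondecreasing P.cdf_lim_at_bot P.cdf_lim_at_top_prob)
qed

lemma X_eq: "X n = (\<lambda>\<omega>. q (U n \<omega>))"
  using encoder by (auto simp: U_def)

lemma X_meas[measurable]: "X n \<in> borel_measurable M"
  unfolding X_eq by measurable

lemma nu_prob: "prob_space (nu n)"
  unfolding nu_def by (rule prob_space_distr) measurable

lemma sets_nu[simp, measurable_cong]: "sets (nu n) = sets (Yspace n)" by (simp add: nu_def)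
lemma space_nu[simp]: "space (nu n) = space (Yspace n)" by (simp add: nu_def)
lemma sets_mu[simp, measurable_cong]: "sets (mu n) = sets (borel \<Otimes>\<^sub>M Yspace n)" by (simp add: mu_def)

end



context th6 begin

lemma pair_lb_nu: "pair_sigma_finite lborel (nu n)"
proof -
  interpret N: prob_space "nu n" by (rule nu_prob)
  show ?thesis by (intro pair_sigma_finite.intro sigma_finite_lborel N.sigma_finite_measure_axioms)
qed

lemma post_ennreal:
  assumes B: "B \<in> sets (Yspace n)"
  shows "emeasure (mu n) ({..\<theta>} \<times> B) = (\<integral>\<^sup>+y. ennreal (Fpost n y \<theta>) * indicator B y \<partial>nu n)"
proof -
  have "emeasure (mu n) ({..\<theta>} \<times> B) = emeasure M {\<omega>\<in>space M. \<Theta>0 \<omega> \<le> \<theta> \<and> Yvec Y n \<omega> \<in> B}"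
    unfolding mu_def using B
    by (subst emeasure_distr) (auto intro!: arg_cong[where f="emeasure M"])
  also have "\<dots> = ennreal (measure M {\<omega>\<in>space M. \<Theta>0 \<omega> \<le> \<theta> \<and> Yvec Y n \<omega> \<in> B})"
    by (simp add: emeasure_eq_measure)
  also have "\<dots> = ennreal (\<integral>\<omega>. indicator B (Yvec Y n \<omega>) * Fpost n (Yvec Y n \<omega>) \<theta> \<partial>M)"
    using posterior B by simp
  also have "\<dots> = (\<integral>\<^sup>+\<omega>. ennreal (indicator B (Yvec Y n \<omega>) * Fpost n (Yvec Y n \<omega>) \<theta>) \<partial>M)"
  proof (rule nn_integral_eq_integral[symmetric])
    show "integrable M (\<lambda>\<omega>. indicator B (Yvec Y n \<omega>) * Fpost n (Yvec Y n \<omega>) \<theta>)"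
    proof (rule integrable_const_bound[where B=1])
      show "AE \<omega> in M. norm (indicator B (Yvec Y n \<omega>) * Fpost n (Yvec Y n \<omega>) \<theta>) \<le> (1::real)"
        using Fbounds by (auto simp: indicator_def)
    qed (use B in measurable)
  qed (auto simp: Fbounds)
  also have "\<dots> = (\<integral>\<^sup>+y. ennreal (indicator B y * Fpost n y \<theta>) \<partial>nu n)"
    unfolding nu_def using B by (subst nn_integral_distr) auto
  also have "\<dots> = (\<integral>\<^sup>+y. ennreal (Fpost n y \<theta>) * indicator B y \<partial>nu n)"
    by (intro nn_integral_cong) (auto simp: indicator_def)
  finally show ?thesis .
qed


definition "fd n = RN_deriv (lborel \<Otimes>\<^sub>M nu n) (mu n)"
definition "lam n y = density lborel (\<lambda>t. fd n (t, y))"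

lemma sf_L: "sigma_finite_measure (lborel \<Otimes>\<^sub>M nu n)"
proof -
  interpret N: prob_space "nu n" by (rule nu_prob)
  show ?thesis by (intro sigma_finite_pair_measure sigma_finite_lborel N.sigma_finite_measure_axioms)
qed

lemma fd_meas[measurable]: "fd n \<in> borel_measurable (lborel \<Otimes>\<^sub>M nu n)"
  unfolding fd_def by (rule borel_measurable_RN_deriv)

lemma space_mu[simp]: "space (mu n) = space (borel \<Otimes>\<^sub>M Yspace n)" by (simp add: mu_def)

lemma sets_L: "sets (lborel \<Otimes>\<^sub>M nu n) = sets (borel \<Otimes>\<^sub>M Yspace n)"
  by (rule sets_pair_measure_cong) auto

lemma fd_meas': "fd n \<in> borel_measurable (borel \<Otimes>\<^sub>M Yspace n)"
  using fd_meas[of n] measurable_cong_sets[OF sets_L refl] by blast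

lemma fd_swap_meas: "(\<lambda>p. fd n (snd p, fst p)) \<in> borel_measurable (nu n \<Otimes>\<^sub>M lborel)"
  using measurable_pair_swap[OF fd_meas[of n]] by (simp add: case_prod_beta')

lemma fd_sec_meas: "y \<in> space (Yspace n) \<Longrightarrow> (\<lambda>t. fd n (t, y)) \<in> borel_measurable lborel"
  using measurable_Pair1[OF fd_meas[of n], of y] by simp

lemma sets_lam[simp, measurable_cong]: "sets (lam n y) = sets borel" by (simp add: lam_def)
lemma space_lam[simp]: "space (lam n y) = UNIV" by (simp add: lam_def)

lemma lam_emeasure: "y \<in> space (Yspace n) \<Longrightarrow> A \<in> sets borel \<Longrightarrow>
    emeasure (lam n y) A = (\<integral>\<^sup>+t. fd n (t, y) * indicator A t \<partial>lborel)"
  unfolding lam_def using fd_sec_meas[of y n] by (subst emeasure_density) auto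

lemma lam_meas: "A \<in> sets borel \<Longrightarrow> (\<lambda>y. emeasure (lam n y) A) \<in> borel_measurable (nu n)"
proof -
  assume A: "A \<in> sets borel"
  have "(\<lambda>y. \<integral>\<^sup>+t. fd n (t, y) * indicator A t \<partial>lborel) \<in> borel_measurable (nu n)"
  proof (rule lborel.borel_measurable_nn_integral)
    have "(\<lambda>p. fd n (snd p, fst p) * indicator A (snd p)) \<in> borel_measurable (nu n \<Otimes>\<^sub>M lborel)"
      using fd_swap_meas[of n] A by measurable
    then show "(\<lambda>(y, t). fd n (t, y) * indicator A t) \<in> borel_measurable (nu n \<Otimes>\<^sub>M lborel)"
      by (simp add: case_prod_beta')
  qed
  then show ?thesis
    by (rule measurable_cong[THEN iffD1, rotated]) (use A lam_emeasure in auto)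
qed

lemma lam_atom: "y \<in> space (Yspace n) \<Longrightarrow> measure (lam n y) {x} = 0"
proof -
  assume y: "y \<in> space (Yspace n)"
  have "emeasure (lam n y) {x} = (\<integral>\<^sup>+t. fd n (t, y) * indicator {x} t \<partial>lborel)"
    using lam_emeasure[OF y] by simp
  also have "\<dots> = (\<integral>\<^sup>+t. 0 \<partial>(lborel::real measure))"
    apply (rule nn_integral_cong_AE) using AE_lborel_singleton[of x] by (auto elim!: eventually_mono)
  finally show ?thesis by (simp add: measure_def)
qed

lemma Fpost_borel[measurable]: "Fpost n y \<in> borel_measurable borel"
  by (rule borel_measurable_mono[OF Fmono])

context fixes n assumes AC: "absolutely_continuous (lborel \<Otimes>\<^sub>M nu n) (mu n)"
begin

lemma dens_mu: "density (lborel \<Otimes>\<^sub>M nu n) (fd n) = mu n"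
  unfolding fd_def
  by (rule sigma_finite_measure.density_RN_deriv[OF sf_L AC]) (simp add: sets_L)

lemma mu_int:
  assumes A: "A \<in> sets (borel \<Otimes>\<^sub>M Yspace n)"
  shows "emeasure (mu n) A = (\<integral>\<^sup>+y. emeasure (lam n y) {t. (t, y) \<in> A} \<partial>nu n)"
proof -
  interpret PS: pair_sigma_finite lborel "nu n" by (rule pair_lb_nu)
  have A': "A \<in> sets (lborel \<Otimes>\<^sub>M nu n)" using A by (simp add: sets_L)
  have "emeasure (mu n) A = (\<integral>\<^sup>+z. fd n z * indicator A z \<partial>(lborel \<Otimes>\<^sub>M nu n))"
    by (subst dens_mu[symmetric]) (rule emeasure_density[OF fd_meas A'])
  also have "\<dots> = (\<integral>\<^sup>+y. \<integral>\<^sup>+t. fd n (t, y) * indicator A (t, y) \<partial>lborel \<partial>nu n)"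
    by (rule PS.nn_integral_snd[symmetric]) (use A' in measurable)
  also have "\<dots> = (\<integral>\<^sup>+y. emeasure (lam n y) {t. (t, y) \<in> A} \<partial>nu n)"
  proof (rule nn_integral_cong)
    fix y assume y: "y \<in> space (nu n)"
    have "(\<lambda>t. (t, y)) -` A \<in> sets borel"
      using sets_Pair2[OF A] by simp
    moreover have "(\<lambda>t. (t, y)) -` A = {t. (t, y) \<in> A}" by auto
    ultimately have S: "{t. (t, y) \<in> A} \<in> sets borel" by simp
    show "(\<integral>\<^sup>+t. fd n (t, y) * indicator A (t, y) \<partial>lborel) = emeasure (lam n y) {t. (t, y) \<in> A}"
      unfolding lam_def using S y fd_sec_meas[of y]
      by (subst emeasure_density) (auto intro!: nn_integral_cong simp: indicator_def)
  qed
  finally show ?thesis .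
qed


lemma cdf_ae1: "AE y in nu n. ennreal (Fpost n y \<theta>) = emeasure (lam n y) {..\<theta>}"
proof -
  interpret N: prob_space "nu n" by (rule nu_prob)
  have "density (nu n) (\<lambda>y. ennreal (Fpost n y \<theta>)) = density (nu n) (\<lambda>y. emeasure (lam n y) {..\<theta>})"
  proof (rule measure_eqI)
    fix B assume B: "B \<in> sets (density (nu n) (\<lambda>y. ennreal (Fpost n y \<theta>)))"
    then have B': "B \<in> sets (Yspace n)" by simp
    have "emeasure (density (nu n) (\<lambda>y. ennreal (Fpost n y \<theta>))) B = emeasure (mu n) ({..\<theta>} \<times> B)"
      using B' by (subst emeasure_density) (auto simp: post_ennreal)
    also have "\<dots> = (\<integral>\<^sup>+y. emeasure (lam n y) {t. (t, y) \<in> {..\<theta>} \<times> B} \<partial>nu n)"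
      using B' by (intro mu_int) auto
    also have "\<dots> = (\<integral>\<^sup>+y. emeasure (lam n y) {..\<theta>} * indicator B y \<partial>nu n)"
      by (intro nn_integral_cong) (auto simp: indicator_def atMost_def)
    also have "\<dots> = emeasure (density (nu n) (\<lambda>y. emeasure (lam n y) {..\<theta>})) B"
      using B' lam_meas[of "{..\<theta>}" n] by (subst emeasure_density) auto
    finally show "emeasure (density (nu n) (\<lambda>y. ennreal (Fpost n y \<theta>))) B =
      emeasure (density (nu n) (\<lambda>y. emeasure (lam n y) {..\<theta>})) B" .
  qed simp
  then show ?thesis
    by (rule N.density_unique[rotated 2]) (use lam_meas[of "{..\<theta>}" n] in auto)
qed

lemma cdf_ae: "AE y in nu n. \<forall>r::rat. ennreal (Fpost n y (of_rat r)) = emeasure (lam n y) {..of_rat r}"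
  using cdf_ae1 by (simp add: AE_all_countable)


lemma good_ae: "AE y in nu n. real_distribution (lam n y) \<and> cdf (lam n y) = Fpost n y"
  using cdf_ae
proof (rule AE_mp[OF _ AE_I2], intro impI)
  fix y assume y: "y \<in> space (nu n)"
    and eq: "\<forall>r::rat. ennreal (Fpost n y (of_rat r)) = emeasure (lam n y) {..of_rat r}"
  have eqn: "emeasure (lam n y) {..real m} = ennreal (Fpost n y (real m))" for m :: nat
    using eq[rule_format, of "of_nat m"] by simp
  have tot: "emeasure (lam n y) UNIV = 1"
  proof -
    have "(\<lambda>m. emeasure (lam n y) {..real m}) \<longlonglongrightarrow> emeasure (lam n y) (\<Union>m. {..real m})"
      by (rule Lim_emeasure_incseq) (auto simp: incseq_def)
    moreover have "(\<Union>m. {..real m}) = UNIV"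
      by (auto simp: real_arch_simple)
    moreover have "(\<lambda>m. emeasure (lam n y) {..real m}) \<longlonglongrightarrow> 1"
      unfolding eqn
      using tendsto_ennrealI[OF filterlim_compose[OF Ftop filterlim_real_sequentially]] by simp
    ultimately show ?thesis using LIMSEQ_unique by auto
  qed
  have ps: "prob_space (lam n y)"
    using tot by (intro prob_spaceI) (simp add: space_lam)
  then have rd: "real_distribution (lam n y)"
    by (auto simp: real_distribution_def real_distribution_axioms_def lam_def)
  interpret L: real_distribution "lam n y" by (rule rd)
  have cdf_rat: "cdf (lam n y) (of_rat r) = Fpost n y (of_rat r)" for r
  proof -
    have "ennreal (cdf (lam n y) (of_rat r)) = emeasure (lam n y) {..of_rat r}"
      by (simp add: cdf_def L.emeasure_eq_measure)
    also have "\<dots> = ennreal (Fpost n y (of_rat r))" using eq by simp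
    finally show ?thesis using Fbounds by (simp add: L.cdf_nonneg)
  qed
  have "cdf (lam n y) x = Fpost n y x" for x
  proof -
    have "\<exists>r\<in>\<rat>. x < r \<and> r < x + 1 / real (Suc m)" for m
      by (rule Rats_dense_in_real) auto
    then obtain r where r: "\<And>m. r m \<in> \<rat>" "\<And>m. x < r m" "\<And>m. r m < x + 1 / real (Suc m)"
      by metis
    have "(\<lambda>m. x + inverse (real (Suc m))) \<longlonglongrightarrow> x + 0"
      by (intro tendsto_intros LIMSEQ_inverse_real_of_nat)
    then have h: "(\<lambda>m. x + 1 / real (Suc m)) \<longlonglongrightarrow> x" by (simp add: divide_inverse)
    have "r \<longlonglongrightarrow> x"
      by (rule tendsto_sandwich[OF _ _ tendsto_const h]) (auto intro!: always_eventually less_imp_le r(2) r(3)[unfolded of_nat_Suc])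
    then have lim: "filterlim r (at_right x) sequentially"
      using r by (auto simp: filterlim_at intro!: always_eventually less_imp_neq[symmetric])
    have l1: "(\<lambda>m. cdf (lam n y) (r m)) \<longlonglongrightarrow> cdf (lam n y) x"
      using L.cdf_is_right_cont[of x] lim by (simp add: continuous_within) (metis filterlim_compose)
    have l2: "(\<lambda>m. Fpost n y (r m)) \<longlonglongrightarrow> Fpost n y x"
      using Frc[of x n y] lim by (simp add: continuous_within) (metis filterlim_compose)
    have "cdf (lam n y) (r m) = Fpost n y (r m)" for m
      using r(1)[of m] cdf_rat by (auto elim!: Rats_cases)
    with l1 l2 show ?thesis using LIMSEQ_unique by auto
  qed
  then show "real_distribution (lam n y) \<and> cdf (lam n y) = Fpost n y" using rd by auto
qed


lemma U_joint: "distr M (borel \<Otimes>\<^sub>M Yspace n) (\<lambda>\<omega>. (U n \<omega>, Yvec Y n \<omega>)) = UNI \<Otimes>\<^sub>M nu n"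
proof (rule pair_measure_eqI[symmetric])
  interpret N: prob_space "nu n" by (rule nu_prob)
  interpret Un: prob_space UNI by (rule UNI_prob)
  show "sigma_finite_measure UNI" "sigma_finite_measure (nu n)"
    by (rule Un.sigma_finite_measure_axioms N.sigma_finite_measure_axioms)+
  show "sets (UNI \<Otimes>\<^sub>M nu n) = sets (distr M (borel \<Otimes>\<^sub>M Yspace n) (\<lambda>\<omega>. (U n \<omega>, Yvec Y n \<omega>)))"
    by (simp add: sets_pair_measure_cong[OF sets_UNI sets_nu])
  fix A B assume A: "A \<in> sets UNI" and B: "B \<in> sets (nu n)"
  then have A': "A \<in> sets borel" and B': "B \<in> sets (Yspace n)" by auto
  let ?g = "\<lambda>z::real \<times> (nat \<Rightarrow> real). (Fpost n (snd z) (fst z), snd z)"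
  have gm: "?g \<in> measurable (borel \<Otimes>\<^sub>M Yspace n) (borel \<Otimes>\<^sub>M Yspace n)" by measurable
  have "distr M (borel \<Otimes>\<^sub>M Yspace n) (\<lambda>\<omega>. (U n \<omega>, Yvec Y n \<omega>)) = distr (mu n) (borel \<Otimes>\<^sub>M Yspace n) ?g"
    unfolding mu_def by (subst distr_distr) (auto simp: U_def comp_def intro: gm)
  then have "emeasure (distr M (borel \<Otimes>\<^sub>M Yspace n) (\<lambda>\<omega>. (U n \<omega>, Yvec Y n \<omega>))) (A \<times> B)
      = emeasure (mu n) (?g -` (A \<times> B) \<inter> space (borel \<Otimes>\<^sub>M Yspace n))"
    using A' B' gm by (simp add: emeasure_distr measurable_cong_sets[OF sets_mu refl])
  also have "\<dots> = (\<integral>\<^sup>+y. emeasure (lam n y) {t. (t, y) \<in> ?g -` (A \<times> B) \<inter> space (borel \<Otimes>\<^sub>M Yspace n)} \<partial>nu n)"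
    using A' B' gm by (intro mu_int) (auto intro!: measurable_sets)
  also have "\<dots> = (\<integral>\<^sup>+y. emeasure UNI A * indicator B y \<partial>nu n)"
  proof (rule nn_integral_cong_AE)
    show "AE y in nu n. emeasure (lam n y) {t. (t, y) \<in> ?g -` (A \<times> B) \<inter> space (borel \<Otimes>\<^sub>M Yspace n)}
        = emeasure UNI A * indicator B y"
      using good_ae
    proof (rule AE_mp[OF _ AE_I2], intro impI)
      fix y assume y: "y \<in> space (nu n)" and g: "real_distribution (lam n y) \<and> cdf (lam n y) = Fpost n y"
      have pit': "distr (lam n y) borel (Fpost n y) = UNI"
        using pit[of "lam n y"] g lam_atom[of y n] y by simp
      show "emeasure (lam n y) {t. (t, y) \<in> ?g -` (A \<times> B) \<inter> space (borel \<Otimes>\<^sub>M Yspace n)}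
        = emeasure UNI A * indicator B y"
      proof (cases "y \<in> B")
        case True
        have "{t. (t, y) \<in> ?g -` (A \<times> B) \<inter> space (borel \<Otimes>\<^sub>M Yspace n)} = Fpost n y -` A \<inter> space (lam n y)"
          using True y by (auto simp: space_pair_measure)
        moreover have "emeasure (lam n y) (Fpost n y -` A \<inter> space (lam n y)) = emeasure (distr (lam n y) borel (Fpost n y)) A"
          by (rule emeasure_distr[symmetric]) (use A' in \<open>auto simp: measurable_cong_sets[OF sets_lam refl]\<close>)
        ultimately show ?thesis
          using True pit' by simp
      next
        case False
        then show ?thesis by simp
      qed
    qed
  qed
  also have "\<dots> = emeasure UNI A * emeasure (nu n) B"
    using B by (simp add: nn_integral_cmult_indicator)
  finally show "emeasure UNI A * emeasure (nu n) B =
      emeasure (distr M (borel \<Otimes>\<^sub>M Yspace n) (\<lambda>\<omega>. (U n \<omega>, Yvec Y n \<omega>))) (A \<times> B)" by simp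
qed

end

end



context th6 begin

lemma phi_le:
  assumes u: "0 < u" "u < 1"
  shows "Inf {t. u \<le> Fpost n y t} \<le> x \<longleftrightarrow> u \<le> Fpost n y x"
proof -
  let ?S = "{t. u \<le> Fpost n y t}"
  have "eventually (\<lambda>z. Fpost n y z < u) at_bot" using order_tendstoD(2)[OF Fbot u(1)] .
  then obtain b where b: "\<And>z. z \<le> b \<Longrightarrow> Fpost n y z < u" by (auto simp: eventually_at_bot_linorder)
  have bdd: "bdd_below ?S"
  proof (rule bdd_belowI[of _ b])
    fix z assume "z \<in> ?S" then have z: "u \<le> Fpost n y z" by simp
    show "b \<le> z"
    proof (rule ccontr)
      assume "\<not> b \<le> z" then have "z \<le> b" by simp
      then show False using b[of z] z by simp
    qed
  qed
  have ne: "?S \<noteq> {}"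
  proof -
    have "eventually (\<lambda>z. Fpost n y z > u) at_top" using order_tendstoD(1)[OF Ftop u(2)] .
    then obtain z where "Fpost n y z > u" by (auto simp: eventually_at_top_linorder)
    then show ?thesis by (auto intro!: exI[of _ z])
  qed
  show ?thesis
  proof
    assume "u \<le> Fpost n y x"
    then show "Inf ?S \<le> x" by (intro cInf_lower bdd) auto
  next
    assume le: "Inf ?S \<le> x"
    show "u \<le> Fpost n y x"
    proof (rule ccontr)
      assume "\<not> u \<le> Fpost n y x" then have "Fpost n y x < u" by simp
      have "eventually (\<lambda>z. Fpost n y z < u) (at_right x)"
        using Frc[of x n y] \<open>Fpost n y x < u\<close> by (simp add: continuous_within order_tendstoD(2))
      then obtain c where c: "c > x" "\<And>z. z > x \<Longrightarrow> z < c \<Longrightarrow> Fpost n y z < u"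
        by (auto simp: eventually_at_right_field)
      define d where "d = (x + c) / 2"
      have d: "x < d" "Fpost n y d < u" using c by (auto simp: d_def)
      have "\<forall>z\<in>?S. d \<le> z"
      proof
        fix z assume "z \<in> ?S"
        then have "u \<le> Fpost n y z" by simp
        show "d \<le> z"
        proof (rule ccontr)
          assume "\<not> d \<le> z" then have "z \<le> d" by simp
          then have "Fpost n y z \<le> Fpost n y d" using Fmono by (auto simp: mono_def)
          with d \<open>u \<le> Fpost n y z\<close> show False by simp
        qed
      qed
      then have "d \<le> Inf ?S" using ne by (intro cInf_greatest) auto
      with le d show False by simp
    qed
  qed
qed

definition "phi n p = (if fst p \<in> {0<..<1} then Inf {t. fst p \<le> Fpost n (snd p) t} else 0)"

lemma phi_meas[measurable]: "phi n \<in> borel_measurable (borel \<Otimes>\<^sub>M Yspace n)"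
proof (rule borel_measurable_iff_le[THEN iffD2], intro allI)
  fix a
  have "{p \<in> space (borel \<Otimes>\<^sub>M Yspace n). phi n p \<le> a} =
     {p \<in> space (borel \<Otimes>\<^sub>M Yspace n). (fst p \<in> {0<..<1} \<and> fst p \<le> Fpost n (snd p) a) \<or> (fst p \<notin> {0<..<1} \<and> 0 \<le> a)}"
    using phi_le by (auto simp: phi_def)
  also have "\<dots> \<in> sets (borel \<Otimes>\<^sub>M Yspace n)" by measurable
  finally show "{p \<in> space (borel \<Otimes>\<^sub>M Yspace n). phi n p \<le> a} \<in> sets (borel \<Otimes>\<^sub>M Yspace n)" .
qed

end



context th6 begin

context fixes n assumes J: "distr M (borel \<Otimes>\<^sub>M Yspace n) (\<lambda>\<omega>. (U n \<omega>, Yvec Y n \<omega>)) = UNI \<Otimes>\<^sub>M nu n"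
begin

lemma UY_meas[measurable]: "(\<lambda>\<omega>. (U n \<omega>, Yvec Y n \<omega>)) \<in> measurable M (borel \<Otimes>\<^sub>M Yspace n)"
  by measurable

lemma C1: "distr M borel (U n) = UNI"
proof (rule measure_eqI)
  interpret N: prob_space "nu n" by (rule nu_prob)
  interpret Un: prob_space UNI by (rule UNI_prob)
  fix A assume "A \<in> sets (distr M borel (U n))"
  then have A: "A \<in> sets borel" by simp
  have "emeasure (distr M borel (U n)) A = emeasure M ((\<lambda>\<omega>. (U n \<omega>, Yvec Y n \<omega>)) -` (A \<times> space (Yspace n)) \<inter> space M)"
    using A measurable_space[OF Yvec_meas] by (subst emeasure_distr) (auto intro!: arg_cong[where f="emeasure M"])
  also have "\<dots> = emeasure (distr M (borel \<Otimes>\<^sub>M Yspace n) (\<lambda>\<omega>. (U n \<omega>, Yvec Y n \<omega>))) (A \<times> space (Yspace n))"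
    using A by (subst emeasure_distr) auto
  also have "\<dots> = emeasure UNI A * emeasure (nu n) (space (nu n))"
    unfolding J using A by (subst N.emeasure_pair_measure_Times) auto
  also have "\<dots> = emeasure UNI A" using N.emeasure_space_1 by simp
  finally show "emeasure (distr M borel (U n)) A = emeasure UNI A" .
qed simp

lemma C4: "distr M borel (X n) = PX"
proof -
  have "distr M borel (X n) = distr (distr M borel (U n)) borel q"
    unfolding X_eq by (subst distr_distr) (auto simp: comp_def)
  also have "\<dots> = PX" unfolding C1 by (rule quantile_distr[OF PX_rd])
  finally show ?thesis .
qed

lemma C5: "distr M (borel \<Otimes>\<^sub>M Yspace n) (\<lambda>\<omega>. (X n \<omega>, Yvec Y n \<omega>)) = distr M borel (X n) \<Otimes>\<^sub>M nu n"
proof -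
  interpret N: prob_space "nu n" by (rule nu_prob)
  have gm: "(\<lambda>(u, y). (q u, y)) \<in> measurable (borel \<Otimes>\<^sub>M Yspace n) (borel \<Otimes>\<^sub>M Yspace n)" by measurable
  have "distr M (borel \<Otimes>\<^sub>M Yspace n) (\<lambda>\<omega>. (X n \<omega>, Yvec Y n \<omega>))
      = distr (distr M (borel \<Otimes>\<^sub>M Yspace n) (\<lambda>\<omega>. (U n \<omega>, Yvec Y n \<omega>))) (borel \<Otimes>\<^sub>M Yspace n) (\<lambda>(u, y). (q u, y))"
    unfolding X_eq by (subst distr_distr[OF gm]) (auto simp: comp_def)
  also have "\<dots> = distr (UNI \<Otimes>\<^sub>M nu n) (borel \<Otimes>\<^sub>M nu n) (\<lambda>(u, y). (q u, (\<lambda>x. x) y))"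
    unfolding J by (rule distr_cong) (auto simp: sets_pair_measure_cong[OF refl sets_nu])
  also have "\<dots> = distr UNI borel q \<Otimes>\<^sub>M distr (nu n) (nu n) (\<lambda>x. x)"
    by (rule pair_measure_distr[symmetric]) (auto simp: distr_id N.sigma_finite_measure_axioms measurable_cong_sets[OF sets_UNI refl])
  also have "\<dots> = distr M borel (X n) \<Otimes>\<^sub>M nu n"
    unfolding C4 by (simp add: distr_id quantile_distr[OF PX_rd])
  finally show ?thesis .
qed


lemma UNI_Iic: "0 \<le> c \<Longrightarrow> c \<le> 1 \<Longrightarrow> emeasure UNI {..c} = ennreal c"
proof -
  interpret Un: prob_space UNI by (rule UNI_prob)
  assume c: "0 \<le> c" "c \<le> 1"
  have "emeasure UNI {..c} = ennreal (cdf UNI c)" by (simp add: cdf_def Un.emeasure_eq_measure)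
  then show ?thesis using c UNI_cdf by simp
qed

lemma C3_rat: "AE \<omega> in M. \<not> (of_rat r < \<Theta>0 \<omega> \<and> U n \<omega> \<le> Fpost n (Yvec Y n \<omega>) (of_rat r))"
proof -
  interpret N: prob_space "nu n" by (rule nu_prob)
  interpret Un: prob_space UNI by (rule UNI_prob)
  interpret PS: pair_sigma_finite UNI "nu n"
    by (intro pair_sigma_finite.intro Un.sigma_finite_measure_axioms N.sigma_finite_measure_axioms)
  let ?r = "of_rat r :: real"
  define E1 where "E1 = {\<omega>\<in>space M. U n \<omega> \<le> Fpost n (Yvec Y n \<omega>) ?r}"
  define E0 where "E0 = {\<omega>\<in>space M. \<Theta>0 \<omega> \<le> ?r \<and> Yvec Y n \<omega> \<in> space (Yspace n)}"
  have E1m: "E1 \<in> sets M" unfolding E1_def by measurable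
  have E0m: "E0 \<in> sets M" unfolding E0_def by measurable
  have sub: "E0 \<subseteq> E1" unfolding E0_def E1_def U_def using Fmono by (auto simp: mono_def)
  let ?G = "{p::real \<times> (nat \<Rightarrow> real). fst p \<le> Fpost n (snd p) ?r} \<inter> space (borel \<Otimes>\<^sub>M Yspace n)"
  have Gm: "?G \<in> sets (borel \<Otimes>\<^sub>M Yspace n)" by measurable
  have "emeasure M E1 = emeasure (distr M (borel \<Otimes>\<^sub>M Yspace n) (\<lambda>\<omega>. (U n \<omega>, Yvec Y n \<omega>))) ?G"
    using Gm measurable_space[OF UY_meas] by (subst emeasure_distr) (auto simp: E1_def intro!: arg_cong[where f="emeasure M"])
  also have "\<dots> = emeasure (UNI \<Otimes>\<^sub>M nu n) ?G" unfolding J ..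
  also have "\<dots> = (\<integral>\<^sup>+y. emeasure UNI ((\<lambda>x. (x, y)) -` ?G) \<partial>nu n)"
    using Gm by (intro PS.emeasure_pair_measure_alt2) (simp add: sets_pair_measure_cong[OF sets_UNI sets_nu])
  also have "\<dots> = (\<integral>\<^sup>+y. ennreal (Fpost n y ?r) * indicator (space (Yspace n)) y \<partial>nu n)"
  proof (rule nn_integral_cong)
    fix y assume y: "y \<in> space (nu n)"
    then have "(\<lambda>x. (x, y)) -` ?G = {..Fpost n y ?r}" by (auto simp: space_pair_measure)
    then show "emeasure UNI ((\<lambda>x. (x, y)) -` ?G) = ennreal (Fpost n y ?r) * indicator (space (Yspace n)) y"
      using y UNI_Iic Fbounds by simp
  qed
  also have "\<dots> = emeasure (mu n) ({..?r} \<times> space (Yspace n))"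
    by (rule post_ennreal[symmetric]) simp
  also have "\<dots> = emeasure M E0"
    unfolding mu_def E0_def by (subst emeasure_distr) (auto intro!: arg_cong[where f="emeasure M"])
  finally have eq: "emeasure M E1 = emeasure M E0" .
  have "emeasure M (E1 - E0) = 0"
    using emeasure_Diff[OF _ E1m E0m sub] eq by (simp add: emeasure_eq_measure)
  moreover have "{\<omega>\<in>space M. \<not> \<not> (?r < \<Theta>0 \<omega> \<and> U n \<omega> \<le> Fpost n (Yvec Y n \<omega>) ?r)} = E1 - E0"
    using measurable_space[OF Yvec_meas] by (auto simp: E1_def E0_def)
  ultimately show ?thesis
    using E1m E0m by (subst AE_iff_measurable[where N="E1 - E0"]) auto
qed

lemma C3: "AE \<omega> in M. \<Theta>0 \<omega> = phi n (U n \<omega>, Yvec Y n \<omega>)"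
proof -
  have "AE u in distr M borel (U n). 0 < u \<and> u < 1" unfolding C1 by (rule AE_UNI_Ioo)
  then have a1: "AE \<omega> in M. 0 < U n \<omega> \<and> U n \<omega> < 1"
    by (subst (asm) AE_distr_iff) auto
  have a2: "AE \<omega> in M. \<forall>r::rat. \<not> (of_rat r < \<Theta>0 \<omega> \<and> U n \<omega> \<le> Fpost n (Yvec Y n \<omega>) (of_rat r))"
    unfolding AE_all_countable using C3_rat by blast
  show ?thesis
    using a1 a2
  proof eventually_elim
    case (elim \<omega>)
    let ?u = "U n \<omega>" and ?y = "Yvec Y n \<omega>" and ?t = "\<Theta>0 \<omega>"
    have ph: "phi n (?u, ?y) = Inf {t. ?u \<le> Fpost n ?y t}" using elim by (simp add: phi_def)
    have "phi n (?u, ?y) \<le> ?t" unfolding ph using phi_le[of ?u n ?y ?t] elim by (simp add: U_def)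
    moreover have "\<not> phi n (?u, ?y) < ?t"
    proof
      assume "phi n (?u, ?y) < ?t"
      then obtain r where r: "r \<in> \<rat>" "phi n (?u, ?y) < r" "r < ?t" using Rats_dense_in_real by blast
      then obtain r' where r': "r = of_rat r'" by (auto elim: Rats_cases)
      have "?u \<le> Fpost n ?y r" using phi_le[of ?u n ?y r] r(2) elim ph by simp
      then show False using elim(2)[rule_format, of r'] r(3) r' by simp
    qed
    ultimately show ?case by simp
  qed
qed

end
end



lemma rc_rat_eq:
  fixes f g :: "real \<Rightarrow> real"
  assumes "\<And>x. continuous (at_right x) f" "\<And>x. continuous (at_right x) g"
    and eq: "\<And>r. f (of_rat r) = g (of_rat r)"
  shows "f x = g x"
proof -
  have "\<exists>r\<in>\<rat>. x < r \<and> r < x + 1 / real (Suc m)" for m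
    by (rule Rats_dense_in_real) auto
  then obtain r where r: "\<And>m. r m \<in> \<rat>" "\<And>m. x < r m" "\<And>m. r m < x + 1 / real (Suc m)"
    by metis
  have "(\<lambda>m. x + inverse (real (Suc m))) \<longlonglongrightarrow> x + 0"
    by (intro tendsto_intros LIMSEQ_inverse_real_of_nat)
  then have h: "(\<lambda>m. x + 1 / real (Suc m)) \<longlonglongrightarrow> x" by (simp add: divide_inverse)
  have "r \<longlonglongrightarrow> x"
    by (rule tendsto_sandwich[OF _ _ tendsto_const h]) (auto intro!: always_eventually less_imp_le r(2) r(3)[unfolded of_nat_Suc])
  then have lim: "filterlim r (at_right x) sequentially"
    using r by (auto simp: filterlim_at intro!: always_eventually less_imp_neq[symmetric])
  have l1: "(\<lambda>m. f (r m)) \<longlonglongrightarrow> f x"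
    using assms(1)[of x] lim by (simp add: continuous_within) (metis filterlim_compose)
  have l2: "(\<lambda>m. g (r m)) \<longlonglongrightarrow> g x"
    using assms(2)[of x] lim by (simp add: continuous_within) (metis filterlim_compose)
  have "f (r m) = g (r m)" for m
    using r(1)[of m] eq by (auto elim!: Rats_cases)
  with l1 l2 show ?thesis using LIMSEQ_unique by auto
qed

context th6 begin

definition "PY = PX \<bind> K"

lemma K_meas': "K \<in> measurable PX (subprob_algebra borel)"
  by (subst measurable_cong_sets[OF PX(2) refl]) (rule Kmeas)

lemma spPX: "space PX = UNIV" using sets_eq_imp_space_eq[OF PX(2)] by simp

lemma K_sub: "subprob_space (K x)" "sets (K x) = sets borel"
  using measurable_space[OF Kmeas, of x] by (auto simp: space_subprob_algebra)

lemma PY_sub: "subprob_space PY"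
  unfolding PY_def
  by (rule subprob_space_bind[OF _ K_meas']) (use PX(1) prob_space_imp_subprob_space in auto)

lemma sets_PY[simp, measurable_cong]: "sets PY = sets borel"
  unfolding PY_def by (rule sets_bind[OF K_sub(2)]) (simp add: spPX)

lemma space_PY[simp]: "space PY = UNIV" using sets_eq_imp_space_eq[OF sets_PY] by simp

lemma K2_meas: "(\<lambda>x. distr (K x) (borel \<Otimes>\<^sub>M borel) (Pair x)) \<in> measurable PX (subprob_algebra (borel \<Otimes>\<^sub>M borel))"
proof (rule measurable_distr2[where f="\<lambda>x y. (x, y)", OF _ K_meas'])
  show "(\<lambda>(x, y). (x, y)) \<in> measurable (PX \<Otimes>\<^sub>M borel) (borel \<Otimes>\<^sub>M borel)"
    by (simp add: measurable_cong_sets[OF sets_pair_measure_cong[OF PX(2) refl] refl] case_prod_beta')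
qed

lemma sets_J: "sets (joint_law PX K) = sets (borel \<Otimes>\<^sub>M borel)"
  unfolding joint_law_def by (rule sets_bind) (auto simp: spPX)

lemma J_rect:
  assumes A: "A \<in> sets borel" and C: "C \<in> sets borel"
  shows "emeasure (joint_law PX K) (A \<times> C) = (\<integral>\<^sup>+x. emeasure (K x) C * indicator A x \<partial>PX)"
proof -
  have "emeasure (joint_law PX K) (A \<times> C) = (\<integral>\<^sup>+x. emeasure (distr (K x) (borel \<Otimes>\<^sub>M borel) (Pair x)) (A \<times> C) \<partial>PX)"
    unfolding joint_law_def using A C by (intro emeasure_bind[OF _ K2_meas]) (auto simp: spPX)
  also have "\<dots> = (\<integral>\<^sup>+x. emeasure (K x) C * indicator A x \<partial>PX)"
  proof (rule nn_integral_cong)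
    fix x
    have "emeasure (distr (K x) (borel \<Otimes>\<^sub>M borel) (Pair x)) (A \<times> C) = emeasure (K x) (Pair x -` (A \<times> C) \<inter> space (K x))"
      using A C by (intro emeasure_distr) (auto simp: measurable_cong_sets[OF K_sub(2) refl])
    also have "\<dots> = emeasure (K x) C * indicator A x"
      using sets_eq_imp_space_eq[OF K_sub(2)] C by (auto simp: indicator_def)
    finally show "emeasure (distr (K x) (borel \<Otimes>\<^sub>M borel) (Pair x)) (A \<times> C) = emeasure (K x) C * indicator A x" .
  qed
  finally show ?thesis .
qed


lemma KD: "AE x in PX. \<forall>C\<in>sets borel. emeasure PY C = 0 \<longrightarrow> emeasure (K x) C = 0"
proof -
  interpret PXp: prob_space PX by (rule PX(1))
  interpret PYf: subprob_space PY by (rule PY_sub)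
  interpret PS: pair_sigma_finite PX PY
    by (intro pair_sigma_finite.intro PXp.sigma_finite_measure_axioms PYf.sigma_finite_measure_axioms)
  let ?Q = "PX \<Otimes>\<^sub>M PY" and ?J = "joint_law PX K"
  have setsQ: "sets ?Q = sets (borel \<Otimes>\<^sub>M borel)" by (rule sets_pair_measure_cong) (auto simp: PX(2))
  have ac: "absolutely_continuous ?Q ?J" using info by (simp add: finite_mutual_info_def Let_def PY_def)
  define r where "r = RN_deriv ?Q ?J"
  have rm[measurable]: "r \<in> borel_measurable ?Q" unfolding r_def by (rule borel_measurable_RN_deriv)
  have dens: "density ?Q r = ?J"
    unfolding r_def by (rule sigma_finite_measure.density_RN_deriv[OF PS.sigma_finite_measure_axioms ac]) (simp only: sets_J setsQ)
  have rsec: "(\<lambda>y. r (x, y)) \<in> borel_measurable PY" for x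
    using measurable_Pair1[OF rm, of x] spPX by simp
  have Km: "(\<lambda>x. emeasure (K x) C) \<in> borel_measurable PX" if "C \<in> sets borel" for C
    using measurable_compose[OF K_meas' measurable_emeasure_subprob_algebra[OF that]] .
  have Dm: "(\<lambda>x. \<integral>\<^sup>+y. r (x, y) * indicator C y \<partial>PY) \<in> borel_measurable PX" if "C \<in> sets borel" for C
    by (rule PYf.borel_measurable_nn_integral) (use that in measurable)
  have one: "AE x in PX. emeasure (K x) C = (\<integral>\<^sup>+y. r (x, y) * indicator C y \<partial>PY)" if C: "C \<in> sets borel" for C
  proof -
    have "density PX (\<lambda>x. emeasure (K x) C) = density PX (\<lambda>x. \<integral>\<^sup>+y. r (x, y) * indicator C y \<partial>PY)"
    proof (rule measure_eqI)
      fix A assume "A \<in> sets (density PX (\<lambda>x. emeasure (K x) C))"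
      then have A: "A \<in> sets borel" by (simp add: PX(2))
      have AC: "A \<times> C \<in> sets ?Q" unfolding setsQ using A C by auto
      have "emeasure (density PX (\<lambda>x. emeasure (K x) C)) A = (\<integral>\<^sup>+x. emeasure (K x) C * indicator A x \<partial>PX)"
        using A Km[OF C] by (subst emeasure_density) (auto simp: PX(2))
      also have "\<dots> = emeasure ?J (A \<times> C)" using J_rect[OF A C] by simp
      also have "\<dots> = (\<integral>\<^sup>+z. r z * indicator (A \<times> C) z \<partial>?Q)"
        using AC by (subst dens[symmetric]) (rule emeasure_density[OF rm AC])
      also have "\<dots> = (\<integral>\<^sup>+x. \<integral>\<^sup>+y. r (x, y) * indicator (A \<times> C) (x, y) \<partial>PY \<partial>PX)"
        by (rule PYf.nn_integral_fst[symmetric]) (use AC in measurable)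
      also have "\<dots> = (\<integral>\<^sup>+x. (\<integral>\<^sup>+y. r (x, y) * indicator C y \<partial>PY) * indicator A x \<partial>PX)"
        by (intro nn_integral_cong) (auto simp: indicator_def)
      also have "\<dots> = emeasure (density PX (\<lambda>x. \<integral>\<^sup>+y. r (x, y) * indicator C y \<partial>PY)) A"
        using A Dm[OF C] by (subst emeasure_density) (auto simp: PX(2))
      finally show "emeasure (density PX (\<lambda>x. emeasure (K x) C)) A =
        emeasure (density PX (\<lambda>x. \<integral>\<^sup>+y. r (x, y) * indicator C y \<partial>PY)) A" .
    qed simp
    then show ?thesis
      by (rule PXp.density_unique[OF Km[OF C] Dm[OF C]])
  qed
  have "AE x in PX. (\<forall>\<rho>::rat. emeasure (K x) {..of_rat \<rho>} = (\<integral>\<^sup>+y. r (x, y) * indicator {..of_rat \<rho>} y \<partial>PY))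
       \<and> emeasure (K x) UNIV = (\<integral>\<^sup>+y. r (x, y) * indicator UNIV y \<partial>PY)"
    using one[of UNIV] one[of "{..of_rat _}"] by (auto simp: AE_all_countable simp del: indicator_UNIV)
  then show ?thesis
  proof (rule eventually_mono)
    fix x
    assume H: "(\<forall>\<rho>::rat. emeasure (K x) {..of_rat \<rho>} = (\<integral>\<^sup>+y. r (x, y) * indicator {..of_rat \<rho>} y \<partial>PY))
       \<and> emeasure (K x) UNIV = (\<integral>\<^sup>+y. r (x, y) * indicator UNIV y \<partial>PY)"
    let ?D = "density PY (\<lambda>y. r (x, y))"
    have Dem: "emeasure ?D C = (\<integral>\<^sup>+y. r (x, y) * indicator C y \<partial>PY)" if "C \<in> sets borel" for C
      using that rsec[of x] by (subst emeasure_density) auto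
    interpret Kx: subprob_space "K x" by (rule K_sub(1))
    have fbK: "finite_borel_measure (K x)"
      by (intro finite_borel_measure.intro Kx.finite_measure_axioms) (simp add: finite_borel_measure_axioms_def K_sub(2))
    have "emeasure ?D UNIV = emeasure (K x) UNIV" using H Dem[of UNIV] by simp
    then have "emeasure ?D (space ?D) \<noteq> \<infinity>"
      using sets_eq_imp_space_eq[OF K_sub(2)] Kx.emeasure_finite[of UNIV] by simp
    then have fD: "finite_measure ?D" by (rule finite_measureI)
    have fbD: "finite_borel_measure ?D"
      by (intro finite_borel_measure.intro fD) (simp add: finite_borel_measure_axioms_def)
    have "cdf (K x) = cdf ?D"
    proof
      fix t
      show "cdf (K x) t = cdf ?D t"
      proof (rule rc_rat_eq[where f="cdf (K x)" and g="cdf ?D"])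
        show "continuous (at_right t) (cdf (K x))" for t
          by (rule finite_borel_measure.cdf_is_right_cont[OF fbK])
        show "continuous (at_right t) (cdf ?D)" for t
          by (rule finite_borel_measure.cdf_is_right_cont[OF fbD])
        fix \<rho> :: rat
        have "emeasure (K x) {..of_rat \<rho>} = emeasure ?D {..of_rat \<rho>}" using H Dem[of "{..of_rat \<rho>}"] by simp
        then show "cdf (K x) (of_rat \<rho>) = cdf ?D (of_rat \<rho>)"
          by (simp add: cdf_def measure_def)
      qed
    qed
    then have KD: "K x = ?D" by (rule cdf_unique'[OF fbK fbD])
    show "\<forall>C\<in>sets borel. emeasure PY C = 0 \<longrightarrow> emeasure (K x) C = 0"
    proof (intro ballI impI)
      fix C assume C: "C \<in> sets borel" and z: "emeasure PY C = 0"
      have "emeasure (K x) C = (\<integral>\<^sup>+y. r (x, y) * indicator C y \<partial>PY)" using KD Dem[OF C] by simp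
      also have "\<dots> = (\<integral>\<^sup>+y. 0 \<partial>PY)"
        using AE_not_in[of C PY] C z by (intro nn_integral_cong_AE) (auto elim!: eventually_mono simp: null_sets_def)
      finally show "emeasure (K x) C = 0" by simp
    qed
  qed
qed

end



context th6 begin

definition "gg n z = q (Fpost n (snd z) (fst z))"
definition "kap n z = distr (K (gg n z)) ((borel \<Otimes>\<^sub>M Yspace n) \<Otimes>\<^sub>M borel) (Pair z)"

lemma gg_meas[measurable]: "gg n \<in> borel_measurable (borel \<Otimes>\<^sub>M Yspace n)"
  unfolding gg_def[abs_def] by measurable

lemma gg_Z: "gg n (\<Theta>0 \<omega>, Yvec Y n \<omega>) = X n \<omega>"
  by (simp add: gg_def X_eq U_def)

lemma kap_meas: "kap n \<in> measurable (mu n) (subprob_algebra ((borel \<Otimes>\<^sub>M Yspace n) \<Otimes>\<^sub>M borel))"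
  unfolding kap_def[abs_def]
proof (rule measurable_distr2[where f="\<lambda>z a. (z, a)"])
  show "(\<lambda>(z, a). (z, a)) \<in> measurable (mu n \<Otimes>\<^sub>M borel) ((borel \<Otimes>\<^sub>M Yspace n) \<Otimes>\<^sub>M borel)"
    by (simp add: measurable_cong_sets[OF sets_pair_measure_cong[OF sets_mu refl] refl] case_prod_beta')
  have "(\<lambda>z. K (gg n z)) \<in> measurable (borel \<Otimes>\<^sub>M Yspace n) (subprob_algebra borel)"
    by (rule measurable_compose[OF gg_meas Kmeas])
  then show "(\<lambda>z. K (gg n z)) \<in> measurable (mu n) (subprob_algebra borel)"
    by (simp add: measurable_cong_sets[OF sets_mu refl])
qed

lemma kap_em:
  assumes z: "z \<in> space (borel \<Otimes>\<^sub>M Yspace n)" and T: "T \<in> sets ((borel \<Otimes>\<^sub>M Yspace n) \<Otimes>\<^sub>M borel)"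
  shows "emeasure (kap n z) T = emeasure (K (gg n z)) (Pair z -` T)"
proof -
  have "Pair z \<in> measurable (K (gg n z)) ((borel \<Otimes>\<^sub>M Yspace n) \<Otimes>\<^sub>M borel)"
    using measurable_Pair1'[OF z, of borel] by (simp add: measurable_cong_sets[OF K_sub(2) refl])
  then show ?thesis
    unfolding kap_def using T sets_eq_imp_space_eq[OF K_sub(2)] by (subst emeasure_distr) auto
qed

lemma D2_em:
  assumes T: "T \<in> sets ((borel \<Otimes>\<^sub>M Yspace n) \<Otimes>\<^sub>M borel)"
  shows "emeasure (mu n \<bind> kap n) T = (\<integral>\<^sup>+\<omega>. emeasure (K (X n \<omega>)) (Pair (\<Theta>0 \<omega>, Yvec Y n \<omega>) -` T) \<partial>M)"
proof -
  have ne: "space (mu n) \<noteq> {}"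
  proof -
    have "space M \<noteq> {}" using not_empty .
    then obtain \<omega> where "\<omega> \<in> space M" by blast
    then show ?thesis using measurable_space[OF Z_meas, of \<omega> n] by auto
  qed
  have "emeasure (mu n \<bind> kap n) T = (\<integral>\<^sup>+z. emeasure (kap n z) T \<partial>mu n)"
    by (rule emeasure_bind[OF ne kap_meas T])
  also have "\<dots> = (\<integral>\<^sup>+\<omega>. emeasure (kap n (\<Theta>0 \<omega>, Yvec Y n \<omega>)) T \<partial>M)"
  proof -
    have m: "(\<lambda>z. emeasure (kap n z) T) \<in> borel_measurable (mu n)"
      by (rule measurable_compose[OF kap_meas measurable_emeasure_subprob_algebra[OF T]])
    show ?thesis using m unfolding mu_def by (rule nn_integral_distr[OF Z_meas])
  qed
  also have "\<dots> = (\<integral>\<^sup>+\<omega>. emeasure (K (X n \<omega>)) (Pair (\<Theta>0 \<omega>, Yvec Y n \<omega>) -` T) \<partial>M)"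
    by (intro nn_integral_cong) (simp add: kap_em[OF measurable_space[OF Z_meas] T] gg_Z)
  finally show ?thesis .
qed


lemma mu_ne: "space (mu n) \<noteq> {}"
proof -
  have "space M \<noteq> {}" using not_empty .
  then obtain \<omega> where "\<omega> \<in> space M" by blast
  then show ?thesis using measurable_space[OF Z_meas, of \<omega> n] by auto
qed

lemma chan_ext:
  assumes T: "T \<in> sets ((borel \<Otimes>\<^sub>M Yspace n) \<Otimes>\<^sub>M borel)"
  shows "emeasure M {\<omega>\<in>space M. ((\<Theta>0 \<omega>, Yvec Y n \<omega>), Y n \<omega>) \<in> T}
     = (\<integral>\<^sup>+\<omega>. emeasure (K (X n \<omega>)) (Pair (\<Theta>0 \<omega>, Yvec Y n \<omega>) -` T) \<partial>M)"
proof -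
  let ?S = "(borel \<Otimes>\<^sub>M Yspace n) \<Otimes>\<^sub>M borel"
  let ?W = "\<lambda>\<omega>. ((\<Theta>0 \<omega>, Yvec Y n \<omega>), Y n \<omega>)"
  have Wm: "?W \<in> measurable M ?S" by measurable
  let ?D1 = "distr M ?S ?W"
  let ?E = "{a \<times> b | a b. a \<in> sets ((borel::real measure) \<Otimes>\<^sub>M Yspace n) \<and> b \<in> sets (borel::real measure)}"
  let ?\<Omega> = "space ((borel::real measure) \<Otimes>\<^sub>M Yspace n) \<times> space (borel::real measure)"
  have D2sets: "sets (mu n \<bind> kap n) = sets ?S"
    by (rule sets_bind_measurable[OF kap_meas mu_ne])
  have "?D1 = mu n \<bind> kap n"
  proof (rule measure_eqI_generator_eq[where E="?E" and \<Omega>="?\<Omega>" and A="\<lambda>_. ?\<Omega>"])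
    show "Int_stable ?E" by (rule Int_stable_pair_measure_generator)
    show "?E \<subseteq> Pow ?\<Omega>" by (rule pair_measure_closed)
    show "sets ?D1 = sigma_sets ?\<Omega> ?E" by (simp add: sets_pair_measure)
    show "sets (mu n \<bind> kap n) = sigma_sets ?\<Omega> ?E" unfolding D2sets by (simp add: sets_pair_measure)
    show "range (\<lambda>_. ?\<Omega>) \<subseteq> ?E"
      using sets.top[of "(borel::real measure) \<Otimes>\<^sub>M Yspace n"] sets.top[of "borel::real measure"] by blast
    show "(\<Union>i::nat. ?\<Omega>) = ?\<Omega>" by simp
    show "emeasure ?D1 ?\<Omega> \<noteq> \<infinity>" for i :: nat
    proof -
      interpret D: prob_space ?D1 by (rule prob_space_distr[OF Wm])
      show ?thesis using D.emeasure_finite by auto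
    qed
    fix R assume "R \<in> ?E"
    then obtain B :: "(real \<times> (nat \<Rightarrow> real)) set" and C :: "real set" where R: "R = B \<times> C" and B: "B \<in> sets (borel \<Otimes>\<^sub>M Yspace n)" and C: "C \<in> sets (borel::real measure)" by auto
    have RS: "R \<in> sets ?S" using R B C by simp
    have "emeasure ?D1 R = emeasure M {\<omega>\<in>space M. (\<Theta>0 \<omega>, Yvec Y n \<omega>) \<in> B \<and> Y n \<omega> \<in> C}"
      using RS Wm by (subst emeasure_distr) (auto simp: R intro!: arg_cong[where f="emeasure M"])
    also have "\<dots> = (\<integral>\<^sup>+\<omega>. indicator B (\<Theta>0 \<omega>, Yvec Y n \<omega>) * emeasure (K (X n \<omega>)) C \<partial>M)"
      using channel B C by simp
    also have "\<dots> = (\<integral>\<^sup>+\<omega>. emeasure (K (X n \<omega>)) (Pair (\<Theta>0 \<omega>, Yvec Y n \<omega>) -` R) \<partial>M)"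
      by (intro nn_integral_cong) (auto simp: R)
    also have "\<dots> = emeasure (mu n \<bind> kap n) R" by (rule D2_em[OF RS, symmetric])
    finally show "emeasure ?D1 R = emeasure (mu n \<bind> kap n) R" .
  qed
  then have "emeasure ?D1 T = emeasure (mu n \<bind> kap n) T" by simp
  moreover have "emeasure ?D1 T = emeasure M {\<omega>\<in>space M. ((\<Theta>0 \<omega>, Yvec Y n \<omega>), Y n \<omega>) \<in> T}"
    using T Wm by (subst emeasure_distr) (auto intro!: arg_cong[where f="emeasure M"])
  ultimately show ?thesis using D2_em[OF T] by simp
qed

end



lemma ins_meas: "(\<lambda>p. (fst p)(n := snd p)) \<in> measurable (Yspace n \<Otimes>\<^sub>M borel) (Yspace (Suc n))"
  unfolding Yspace_def
proof (rule measurable_PiM_single')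
  fix i assume i: "i \<in> {..<Suc n}"
  show "(\<lambda>p. ((fst p)(n := snd p)) i) \<in> borel_measurable (Pi\<^sub>M {..<n} (\<lambda>_. borel) \<Otimes>\<^sub>M borel)"
  proof (cases "i = n")
    case True then show ?thesis by simp
  next
    case False
    then have "i \<in> {..<n}" using i by auto
    then have "(\<lambda>p. fst p i) \<in> borel_measurable (Pi\<^sub>M {..<n} (\<lambda>_. borel) \<Otimes>\<^sub>M borel)"
      by measurable
    then show ?thesis using False by simp
  qed
next
  show "(\<lambda>p. (fst p)(n := snd p)) \<in> space (Pi\<^sub>M {..<n} (\<lambda>_. borel) \<Otimes>\<^sub>M borel) \<rightarrow> (\<Pi>\<^sub>E i\<in>{..<Suc n}. space borel)"
    by (auto simp: space_pair_measure space_PiM PiE_iff extensional_def split: if_split_asm) (metis less_SucI)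
qed

lemma Yvec_Suc: "Yvec Y (Suc n) \<omega> = (Yvec Y n \<omega>)(n := Y n \<omega>)"
  by (auto simp: Yvec_def)

lemma space_Yspace0: "space (Yspace 0) = {\<lambda>_. undefined}"
  by (simp add: Yspace_def space_PiM_empty)

context th6 begin

lemma AC0: "absolutely_continuous (lborel \<Otimes>\<^sub>M nu 0) (mu 0)"
  unfolding absolutely_continuous_def
proof
  fix S :: "(real \<times> (nat \<Rightarrow> real)) set" assume "S \<in> null_sets (lborel \<Otimes>\<^sub>M nu 0)"
  then have S: "S \<in> sets (lborel \<Otimes>\<^sub>M nu 0)" and S0: "emeasure (lborel \<Otimes>\<^sub>M nu 0) S = 0" by auto
  interpret PS: pair_sigma_finite lborel "nu 0" by (rule pair_lb_nu)
  interpret N: prob_space "nu 0" by (rule nu_prob)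
  let ?c = "\<lambda>_::nat. undefined :: real"
  let ?h = "\<lambda>w. emeasure lborel ((\<lambda>t. (t, w)) -` S)"
  have hm: "?h \<in> borel_measurable (nu 0)" by (rule PS.measurable_emeasure_Pair2[OF S])
  have "(\<integral>\<^sup>+w. ?h w \<partial>nu 0) = 0" using S0 PS.emeasure_pair_measure_alt2[OF S] by simp
  then have "AE w in nu 0. ?h w = 0" using nn_integral_0_iff_AE[OF hm] by simp
  moreover have "AE w in nu 0. w = ?c" by (rule AE_I2) (simp add: space_Yspace0)
  ultimately have "AE w in nu 0. ?h ?c = 0" by eventually_elim simp
  then have hc: "?h ?c = 0" by simp
  have S': "S \<in> sets (borel \<Otimes>\<^sub>M Yspace 0)" using S sets_L by simp
  have Yc: "Yvec Y 0 \<omega> = ?c" for \<omega> by (auto simp: Yvec_def)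
  have "emeasure (mu 0) S = emeasure M (\<Theta>0 -` ((\<lambda>t. (t, ?c)) -` S) \<inter> space M)"
    unfolding mu_def by (subst emeasure_distr[OF Z_meas S']) (auto simp: Yc intro!: arg_cong[where f="emeasure M"])
  also have "\<dots> = emeasure (distr M borel \<Theta>0) ((\<lambda>t. (t, ?c)) -` S)"
    using sets_Pair2[OF S'] by (subst emeasure_distr) auto
  also have "\<dots> = emeasure lborel ({0<..<1} \<inter> (\<lambda>t. (t, ?c)) -` S)"
    unfolding theta(2) using sets_Pair2[OF S'] by (simp add: divide_ennreal_def)
  also have "\<dots> \<le> ?h ?c"
    using sets_Pair2[OF S'] by (intro emeasure_mono) auto
  finally have "emeasure (mu 0) S = 0" using hc by simp
  then show "S \<in> null_sets (mu 0)" using S' by auto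
qed

end



context th6 begin

lemma KD_M:
  assumes C4n: "distr M borel (X n) = PX"
  shows "AE \<omega> in M. \<forall>C\<in>sets borel. emeasure PY C = 0 \<longrightarrow> emeasure (K (X n \<omega>)) C = 0"
proof -
  from KD obtain N0 where N0: "{x \<in> space PX. \<not> (\<forall>C\<in>sets borel. emeasure PY C = 0 \<longrightarrow> emeasure (K x) C = 0)} \<subseteq> N0"
    "emeasure PX N0 = 0" "N0 \<in> sets PX" by (rule AE_E)
  have N0b: "N0 \<in> sets borel" using N0(3) PX(2) by simp
  have "emeasure M (X n -` N0 \<inter> space M) = emeasure (distr M borel (X n)) N0"
    using N0b by (subst emeasure_distr) auto
  also have "\<dots> = 0" using C4n N0(2) by simp
  finally have "AE \<omega> in M. \<omega> \<notin> X n -` N0 \<inter> space M"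
    using N0b by (intro AE_not_in) auto
  then show ?thesis
  proof (rule AE_mp[OF _ AE_I2], intro impI)
    fix \<omega> assume "\<omega> \<in> space M" "\<omega> \<notin> X n -` N0 \<inter> space M"
    then show "\<forall>C\<in>sets borel. emeasure PY C = 0 \<longrightarrow> emeasure (K (X n \<omega>)) C = 0"
      using N0(1) spPX by auto
  qed
qed


lemma AC_step:
  assumes ACn: "absolutely_continuous (lborel \<Otimes>\<^sub>M nu n) (mu n)"
    and C4n: "distr M borel (X n) = PX"
  shows "absolutely_continuous (lborel \<Otimes>\<^sub>M nu (Suc n)) (mu (Suc n))"
  unfolding absolutely_continuous_def
proof
  fix S :: "(real \<times> (nat \<Rightarrow> real)) set"
  assume "S \<in> null_sets (lborel \<Otimes>\<^sub>M nu (Suc n))"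
  then have S: "S \<in> sets (lborel \<Otimes>\<^sub>M nu (Suc n))" and S0: "emeasure (lborel \<Otimes>\<^sub>M nu (Suc n)) S = 0" by auto
  have S': "S \<in> sets (borel \<Otimes>\<^sub>M Yspace (Suc n))" using S sets_L by simp
  interpret PSm: pair_sigma_finite lborel "nu (Suc n)" by (rule pair_lb_nu)
  interpret PSn: pair_sigma_finite lborel "nu n" by (rule pair_lb_nu)
  interpret PYf: subprob_space PY by (rule PY_sub)
  interpret PS2: pair_sigma_finite "lborel \<Otimes>\<^sub>M nu n" PY
    by (intro pair_sigma_finite.intro sf_L PYf.sigma_finite_measure_axioms)
  define h where "h w = emeasure lborel ((\<lambda>t. (t, w)) -` S)" for w
  have hm: "h \<in> borel_measurable (nu (Suc n))" unfolding h_def[abs_def] by (rule PSm.measurable_emeasure_Pair2[OF S])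
  then have hm'[measurable]: "h \<in> borel_measurable (Yspace (Suc n))" by (simp add: measurable_cong_sets[OF sets_nu refl])
  have "(\<integral>\<^sup>+w. h w \<partial>nu (Suc n)) = 0" using S0 PSm.emeasure_pair_measure_alt2[OF S] by (simp add: h_def)
  then have "AE w in nu (Suc n). h w = 0" using nn_integral_0_iff_AE[OF hm] by simp
  then have AEh: "AE \<omega> in M. h (Yvec Y (Suc n) \<omega>) = 0"
    unfolding nu_def by (subst (asm) AE_distr_iff) auto
  define \<psi> where "\<psi> p = (fst (fst p), (snd (fst p))(n := snd p))" for p :: "(real \<times> (nat \<Rightarrow> real)) \<times> real"
  have \<psi>m[measurable]: "\<psi> \<in> measurable ((borel \<Otimes>\<^sub>M Yspace n) \<Otimes>\<^sub>M borel) (borel \<Otimes>\<^sub>M Yspace (Suc n))"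
  proof -
    have "(\<lambda>p. (snd (fst p), snd p)) \<in> measurable ((borel \<Otimes>\<^sub>M Yspace n) \<Otimes>\<^sub>M borel) (Yspace n \<Otimes>\<^sub>M borel)"
      by measurable
    from measurable_compose[OF this ins_meas]
    have "(\<lambda>p. (snd (fst p))(n := snd p)) \<in> measurable ((borel \<Otimes>\<^sub>M Yspace n) \<Otimes>\<^sub>M borel) (Yspace (Suc n))" by simp
    then show ?thesis unfolding \<psi>_def[abs_def] by measurable
  qed
  define T where "T = {p \<in> space ((borel \<Otimes>\<^sub>M Yspace n) \<Otimes>\<^sub>M borel). \<psi> p \<in> S \<and> h (snd (\<psi> p)) = 0}"
  have Tm: "T \<in> sets ((borel \<Otimes>\<^sub>M Yspace n) \<Otimes>\<^sub>M borel)"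
    unfolding T_def using S' by measurable
  have "emeasure (mu (Suc n)) S = emeasure M {\<omega>\<in>space M. (\<Theta>0 \<omega>, Yvec Y (Suc n) \<omega>) \<in> S}"
    unfolding mu_def by (subst emeasure_distr[OF Z_meas S']) (auto intro!: arg_cong[where f="emeasure M"])
  also have "\<dots> = emeasure M {\<omega>\<in>space M. ((\<Theta>0 \<omega>, Yvec Y n \<omega>), Y n \<omega>) \<in> T}"
  proof (rule emeasure_eq_AE)
    show "AE \<omega> in M. (\<omega> \<in> {\<omega>\<in>space M. (\<Theta>0 \<omega>, Yvec Y (Suc n) \<omega>) \<in> S}) =
        (\<omega> \<in> {\<omega>\<in>space M. ((\<Theta>0 \<omega>, Yvec Y n \<omega>), Y n \<omega>) \<in> T})"
      using AEh
    proof (rule AE_mp[OF _ AE_I2], intro impI)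
      fix \<omega> assume \<omega>: "\<omega> \<in> space M" and h0: "h (Yvec Y (Suc n) \<omega>) = 0"
      have sp: "((\<Theta>0 \<omega>, Yvec Y n \<omega>), Y n \<omega>) \<in> space ((borel \<Otimes>\<^sub>M Yspace n) \<Otimes>\<^sub>M borel)"
        using measurable_space[OF Z_meas \<omega>] by (simp add: space_pair_measure)
      have "\<psi> ((\<Theta>0 \<omega>, Yvec Y n \<omega>), Y n \<omega>) = (\<Theta>0 \<omega>, Yvec Y (Suc n) \<omega>)"
        by (simp add: \<psi>_def Yvec_Suc)
      then show "(\<omega> \<in> {\<omega>\<in>space M. (\<Theta>0 \<omega>, Yvec Y (Suc n) \<omega>) \<in> S}) =
        (\<omega> \<in> {\<omega>\<in>space M. ((\<Theta>0 \<omega>, Yvec Y n \<omega>), Y n \<omega>) \<in> T})"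
        using \<omega> sp h0 by (auto simp: T_def)
    qed
    show "{\<omega>\<in>space M. (\<Theta>0 \<omega>, Yvec Y (Suc n) \<omega>) \<in> S} \<in> sets M"
      using S' by measurable
    show "{\<omega>\<in>space M. ((\<Theta>0 \<omega>, Yvec Y n \<omega>), Y n \<omega>) \<in> T} \<in> sets M"
      using Tm by measurable
  qed
  also have "\<dots> = (\<integral>\<^sup>+\<omega>. emeasure (K (X n \<omega>)) (Pair (\<Theta>0 \<omega>, Yvec Y n \<omega>) -` T) \<partial>M)"
    by (rule chan_ext[OF Tm])
  also have "\<dots> = 0"
  proof -
    define \<eta> where "\<eta> z = emeasure PY (Pair z -` T)" for z
    have T2: "T \<in> sets ((lborel \<Otimes>\<^sub>M nu n) \<Otimes>\<^sub>M PY)"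
      using Tm by (simp add: sets_pair_measure_cong[OF sets_L sets_PY])
    have \<eta>m: "\<eta> \<in> borel_measurable (lborel \<Otimes>\<^sub>M nu n)"
      unfolding \<eta>_def[abs_def] by (rule PYf.measurable_emeasure_Pair[OF T2])
    have "(\<integral>\<^sup>+z. \<eta> z \<partial>(lborel \<Otimes>\<^sub>M nu n)) = emeasure ((lborel \<Otimes>\<^sub>M nu n) \<Otimes>\<^sub>M PY) T"
      unfolding \<eta>_def by (rule PYf.emeasure_pair_measure_alt[OF T2, symmetric])
    also have "\<dots> = (\<integral>\<^sup>+a. emeasure (lborel \<Otimes>\<^sub>M nu n) ((\<lambda>z. (z, a)) -` T) \<partial>PY)"
      by (rule PS2.emeasure_pair_measure_alt2[OF T2])
    also have "\<dots> = (\<integral>\<^sup>+a. 0 \<partial>PY)"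
    proof (rule nn_integral_cong)
      fix a :: real
      have Ta: "(\<lambda>z. (z, a)) -` T \<in> sets (lborel \<Otimes>\<^sub>M nu n)" by (rule sets_Pair2[OF T2])
      have "emeasure (lborel \<Otimes>\<^sub>M nu n) ((\<lambda>z. (z, a)) -` T)
          = (\<integral>\<^sup>+y. emeasure lborel ((\<lambda>t. (t, y)) -` ((\<lambda>z. (z, a)) -` T)) \<partial>nu n)"
        by (rule PSn.emeasure_pair_measure_alt2[OF Ta])
      also have "\<dots> = (\<integral>\<^sup>+y. 0 \<partial>nu n)"
      proof (rule nn_integral_cong)
        fix y assume y: "y \<in> space (nu n)"
        have Tay: "(\<lambda>t. (t, y)) -` ((\<lambda>z. (z, a)) -` T) \<in> sets lborel" by (rule sets_Pair2[OF Ta])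
        show "emeasure lborel ((\<lambda>t. (t, y)) -` ((\<lambda>z. (z, a)) -` T)) = 0"
        proof (cases "(\<lambda>t. (t, y)) -` ((\<lambda>z. (z, a)) -` T) = {}")
          case False
          then obtain t0 where "((t0, y), a) \<in> T" by auto
          then have h0: "h (y(n := a)) = 0" by (simp add: T_def \<psi>_def)
          have "(\<lambda>t. (t, y)) -` ((\<lambda>z. (z, a)) -` T) \<subseteq> (\<lambda>t. (t, y(n := a))) -` S"
            by (auto simp: T_def \<psi>_def)
          then have "emeasure lborel ((\<lambda>t. (t, y)) -` ((\<lambda>z. (z, a)) -` T)) \<le> h (y(n := a))"
            unfolding h_def by (rule emeasure_mono[OF _ sets_Pair2[OF S]])
          then show ?thesis using h0 by simp
        qed simp
      qed
      finally show "emeasure (lborel \<Otimes>\<^sub>M nu n) ((\<lambda>z. (z, a)) -` T) = 0" by simp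
    qed
    finally have "(\<integral>\<^sup>+z. \<eta> z \<partial>(lborel \<Otimes>\<^sub>M nu n)) = 0" by simp
    then have ae0: "AE z in lborel \<Otimes>\<^sub>M nu n. \<eta> z = 0" using nn_integral_0_iff_AE[OF \<eta>m] by simp
    have "AE z in mu n. \<eta> z = 0"
      by (rule absolutely_continuous_AE[OF _ ACn ae0]) (simp add: sets_L)
    then have AE2: "AE \<omega> in M. \<eta> (\<Theta>0 \<omega>, Yvec Y n \<omega>) = 0"
      unfolding mu_def using \<eta>m by (subst (asm) AE_distr_iff) (auto simp: measurable_cong_sets[OF sets_L refl])
    have "AE \<omega> in M. emeasure (K (X n \<omega>)) (Pair (\<Theta>0 \<omega>, Yvec Y n \<omega>) -` T) = 0"
      using AE2 KD_M[OF C4n]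
    proof eventually_elim
      case (elim \<omega>)
      have "Pair (\<Theta>0 \<omega>, Yvec Y n \<omega>) -` T \<in> sets borel" by (rule sets_Pair1[OF Tm])
      then show ?case using elim by (simp add: \<eta>_def)
    qed
    then have "(\<integral>\<^sup>+\<omega>. emeasure (K (X n \<omega>)) (Pair (\<Theta>0 \<omega>, Yvec Y n \<omega>) -` T) \<partial>M) = (\<integral>\<^sup>+\<omega>. 0 \<partial>M)"
      by (rule nn_integral_cong_AE)
    then show ?thesis by simp
  qed
  finally show "S \<in> null_sets (mu (Suc n))" using S' by auto
qed

end



context th6 begin

lemma AC_all: "absolutely_continuous (lborel \<Otimes>\<^sub>M nu n) (mu n)"
proof (induction n)
  case 0 show ?case by (rule AC0)
next
  case (Suc n)
  show ?case by (rule AC_step[OF Suc C4[OF U_joint[OF Suc]]])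
qed

lemma main_n:
  "let U = (\<lambda>\<omega>. Fpost n (Yvec Y n \<omega>) (\<Theta>0 \<omega>)) in
      distr M borel U = uniform_measure lborel {0<..<1}
    \<and> distr M (borel \<Otimes>\<^sub>M Yspace n) (\<lambda>\<omega>. (U \<omega>, Yvec Y n \<omega>))
        = distr M borel U \<Otimes>\<^sub>M distr M (Yspace n) (Yvec Y n)
    \<and> (\<exists>\<phi>\<in>borel_measurable (borel \<Otimes>\<^sub>M Yspace n). AE \<omega> in M. \<Theta>0 \<omega> = \<phi> (U \<omega>, Yvec Y n \<omega>))
    \<and> distr M borel (X n) = PX
    \<and> distr M (borel \<Otimes>\<^sub>M Yspace n) (\<lambda>\<omega>. (X n \<omega>, Yvec Y n \<omega>))
        = distr M borel (X n) \<Otimes>\<^sub>M distr M (Yspace n) (Yvec Y n)"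
proof -
  have J: "distr M (borel \<Otimes>\<^sub>M Yspace n) (\<lambda>\<omega>. (U n \<omega>, Yvec Y n \<omega>)) = UNI \<Otimes>\<^sub>M nu n"
    by (rule U_joint[OF AC_all])
  have Ueq: "(\<lambda>\<omega>. Fpost n (Yvec Y n \<omega>) (\<Theta>0 \<omega>)) = U n" by (simp add: U_def[abs_def])
  show ?thesis
    unfolding Let_def Ueq
    using C1[OF J] J C3[OF J] phi_meas[of n] C4[OF J] C5[OF J]
    by (auto simp: nu_def)
qed

end

theorem mainTheorem6:
  fixes M :: "'a measure" and PX :: "real measure" and K :: "real \<Rightarrow> real measure"
    and A :: "real set" and \<Theta>0 :: "'a \<Rightarrow> real" and Y :: "nat \<Rightarrow> 'a \<Rightarrow> real"
    and X :: "nat \<Rightarrow> 'a \<Rightarrow> real" and Fpost :: "nat \<Rightarrow> (nat \<Rightarrow> real) \<Rightarrow> real \<Rightarrow> real"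
  assumes M: "prob_space M"
    and PX: "prob_space PX" "sets PX = sets borel"
    and alphabet: "A \<in> sets borel" "K \<in> borel \<rightarrow>\<^sub>M subprob_algebra borel"
      "\<forall>x\<in>A. prob_space (K x)"
    and supp: "measure_support PX \<subseteq> A"
    and info: "finite_mutual_info PX K"
    and mixed: "ac_plus_discrete PX" "\<forall>x\<in>A. ac_plus_discrete (K x)"
      "ac_plus_discrete (PX \<bind> K)"
    and theta: "\<Theta>0 \<in> borel_measurable M"
      "distr M borel \<Theta>0 = uniform_measure lborel {0<..<1}"
    and Ymeas: "\<forall>i. Y i \<in> borel_measurable M"
    and post_cdf: "\<forall>n y. mono (Fpost n y) \<and> (\<forall>\<theta>. continuous (at_right \<theta>) (Fpost n y))
        \<and> (Fpost n y \<longlongrightarrow> 0) at_bot \<and> (Fpost n y \<longlongrightarrow> 1) at_top"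
    and post_meas: "\<forall>n \<theta>. (\<lambda>y. Fpost n y \<theta>) \<in> borel_measurable (Yspace n)"
    and posterior: "\<forall>n \<theta> B. B \<in> sets (Yspace n) \<longrightarrow>
        measure M {\<omega>\<in>space M. \<Theta>0 \<omega> \<le> \<theta> \<and> Yvec Y n \<omega> \<in> B}
        = (\<integral>\<omega>. indicator B (Yvec Y n \<omega>) * Fpost n (Yvec Y n \<omega>) \<theta> \<partial>M)"
    and encoder: "\<forall>n \<omega>. X n \<omega> = quantile_fn (cdf PX) (Fpost n (Yvec Y n \<omega>) (\<Theta>0 \<omega>))"
    and channel: "\<forall>n B C. B \<in> sets (borel \<Otimes>\<^sub>M Yspace n) \<longrightarrow> C \<in> sets borel \<longrightarrow>
        emeasure M {\<omega>\<in>space M. (\<Theta>0 \<omega>, Yvec Y n \<omega>) \<in> B \<and> Y n \<omega> \<in> C}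
        = (\<integral>\<^sup>+\<omega>. indicator B (\<Theta>0 \<omega>, Yvec Y n \<omega>) * emeasure (K (X n \<omega>)) C \<partial>M)"
  shows "\<forall>n. let U = (\<lambda>\<omega>. Fpost n (Yvec Y n \<omega>) (\<Theta>0 \<omega>)) in
      distr M borel U = uniform_measure lborel {0<..<1}
    \<and> distr M (borel \<Otimes>\<^sub>M Yspace n) (\<lambda>\<omega>. (U \<omega>, Yvec Y n \<omega>))
        = distr M borel U \<Otimes>\<^sub>M distr M (Yspace n) (Yvec Y n)
    \<and> (\<exists>\<phi>\<in>borel_measurable (borel \<Otimes>\<^sub>M Yspace n). AE \<omega> in M. \<Theta>0 \<omega> = \<phi> (U \<omega>, Yvec Y n \<omega>))
    \<and> distr M borel (X n) = PX
    \<and> distr M (borel \<Otimes>\<^sub>M Yspace n) (\<lambda>\<omega>. (X n \<omega>, Yvec Y n \<omega>))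
        = distr M borel (X n) \<Otimes>\<^sub>M distr M (Yspace n) (Yvec Y n)"
  proof
  fix n
  interpret T: th6 M PX K \<Theta>0 Y X Fpost
    by (intro th6.intro th6_axioms.intro) (use assms in auto)
  show "let U = (\<lambda>\<omega>. Fpost n (Yvec Y n \<omega>) (\<Theta>0 \<omega>)) in
      distr M borel U = uniform_measure lborel {0<..<1}
    \<and> distr M (borel \<Otimes>\<^sub>M Yspace n) (\<lambda>\<omega>. (U \<omega>, Yvec Y n \<omega>))
        = distr M borel U \<Otimes>\<^sub>M distr M (Yspace n) (Yvec Y n)
    \<and> (\<exists>\<phi>\<in>borel_measurable (borel \<Otimes>\<^sub>M Yspace n). AE \<omega> in M. \<Theta>0 \<omega> = \<phi> (U \<omega>, Yvec Y n \<omega>))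
    \<and> distr M borel (X n) = PX
    \<and> distr M (borel \<Otimes>\<^sub>M Yspace n) (\<lambda>\<omega>. (X n \<omega>, Yvec Y n \<omega>))
        = distr M borel (X n) \<Otimes>\<^sub>M distr M (Yspace n) (Yvec Y n)"
    by (rule T.main_n)
qed

end
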